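(* Let $X$ be a closed subspace of a real Banach space $Y$ such that the pair $(X,Y)$ has the Daugavet property, and let $K$ be either $B(Y^* )$ or $\overline{\mathrm{ext}}\,B(Y^* )$, equipped with the weak$^*$ topology. Regard $X$ as a subspace of $C(K)$ via $x\mapsto (k\mapsto k(x))$. Then the pair $(X,C(K))$ has the Daugavet property.
   Context: $B(Y^* )$ is the closed unit ball of $Y^*$; $\overline{\mathrm{ext}}\,B(Y^* )$ denotes the weak$^*$ closure of the set of extreme points of $B(Y^* )$. If $X$ is a closed subspace of a Banach space $Y$ (or isometrically embedded in it) with inclusion $J$, the pair $(X,Y)$ has the Daugavet property if every bounded rank-one linear operator $T:X\to Y$ satisfies $\|J+T\|=1+\|T\|$. *)

theory Defs
  imports "HOL-Analysis.Analysis"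
begin

definition weak_star_topology :: "('y::real_normed_vector \<Rightarrow>\<^sub>L real) topology" where
  "weak_star_topology = pullback_topology UNIV blinfun_apply (product_topology (\<lambda>_. euclideanreal) UNIV)"

definition dual_ball :: "('y::real_normed_vector \<Rightarrow>\<^sub>L real) set" where
  "dual_ball = cball 0 1"

definition ext_closure_dual_ball :: "('y::real_normed_vector \<Rightarrow>\<^sub>L real) set" where
  "ext_closure_dual_ball = weak_star_topology closure_of {f. f extreme_point_of dual_ball}"

definition bounded_linear_on :: "'a::real_normed_vector set \<Rightarrow> ('a \<Rightarrow> 'b::real_normed_vector) \<Rightarrow> bool" where
  "bounded_linear_on X T \<longleftrightarrow>
     (\<forall>x\<in>X. \<forall>y\<in>X. T (x + y) = T x + T y) \<and> (\<forall>c. \<forall>x\<in>X. T (c *\<^sub>R x) = c *\<^sub>R T x) \<and>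
     (\<exists>M. \<forall>x\<in>X. norm (T x) \<le> M * norm x)"

definition op_norm_on :: "'a::real_normed_vector set \<Rightarrow> ('a \<Rightarrow> 'b::real_normed_vector) \<Rightarrow> real" where
  "op_norm_on X T = (SUP x\<in>X \<inter> cball 0 1. norm (T x))"

definition daugavet_pair :: "'y::real_normed_vector set \<Rightarrow> bool" where
  "daugavet_pair X \<longleftrightarrow>
     (\<forall>T. bounded_linear_on X T \<and> dim (T ` X) = 1 \<longrightarrow>
        op_norm_on X (\<lambda>x. x + T x) = 1 + op_norm_on X T)"

text \<open>The space C(K) for K \<subseteq> Y* with the weak-star topology, realised as functions on
  Y* whose values off K are irrelevant; sup norm over K.\<close>
definition CK :: "('y::real_normed_vector \<Rightarrow>\<^sub>L real) set \<Rightarrow> (('y \<Rightarrow>\<^sub>L real) \<Rightarrow> real) set" where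
  "CK K = {g. continuous_map (subtopology weak_star_topology K) euclideanreal g}"

definition CK_norm :: "('y::real_normed_vector \<Rightarrow>\<^sub>L real) set \<Rightarrow> (('y \<Rightarrow>\<^sub>L real) \<Rightarrow> real) \<Rightarrow> real" where
  "CK_norm K g = (SUP k\<in>K. \<bar>g k\<bar>)"

text \<open>Bounded linear operators X \<rightarrow> C(K) (equality in C(K) means equality on K).\<close>
definition bounded_linear_into_CK ::
  "'y::real_normed_vector set \<Rightarrow> ('y \<Rightarrow>\<^sub>L real) set \<Rightarrow> ('y \<Rightarrow> ('y \<Rightarrow>\<^sub>L real) \<Rightarrow> real) \<Rightarrow> bool" where
  "bounded_linear_into_CK X K T \<longleftrightarrow>
     (\<forall>x\<in>X. T x \<in> CK K) \<and>
     (\<forall>x\<in>X. \<forall>y\<in>X. \<forall>k\<in>K. T (x + y) k = T x k + T y k) \<and>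
     (\<forall>c. \<forall>x\<in>X. \<forall>k\<in>K. T (c *\<^sub>R x) k = c * T x k) \<and>
     (\<exists>M. \<forall>x\<in>X. CK_norm K (T x) \<le> M * norm x)"

text \<open>Rank one: the range (as a subspace of C(K)) is one-dimensional, i.e. it is nonzero
  and contained in the span of a single element g of C(K).\<close>
definition rank_one_into_CK ::
  "'y::real_normed_vector set \<Rightarrow> ('y \<Rightarrow>\<^sub>L real) set \<Rightarrow> ('y \<Rightarrow> ('y \<Rightarrow>\<^sub>L real) \<Rightarrow> real) \<Rightarrow> bool" where
  "rank_one_into_CK X K T \<longleftrightarrow>
     (\<exists>x\<in>X. \<exists>k\<in>K. T x k \<noteq> 0) \<and>
     (\<exists>g\<in>CK K. \<forall>x\<in>X. \<exists>c::real. \<forall>k\<in>K. T x k = c * g k)"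

definition op_norm_into_CK ::
  "'y::real_normed_vector set \<Rightarrow> ('y \<Rightarrow>\<^sub>L real) set \<Rightarrow> ('y \<Rightarrow> ('y \<Rightarrow>\<^sub>L real) \<Rightarrow> real) \<Rightarrow> real" where
  "op_norm_into_CK X K T = (SUP x\<in>X \<inter> cball 0 1. CK_norm K (T x))"

definition daugavet_pair_CK :: "'y::real_normed_vector set \<Rightarrow> ('y \<Rightarrow>\<^sub>L real) set \<Rightarrow> bool" where
  "daugavet_pair_CK X K \<longleftrightarrow>
     (\<forall>T. bounded_linear_into_CK X K T \<and> rank_one_into_CK X K T \<longrightarrow>
        op_norm_into_CK X K (\<lambda>x k. blinfun_apply k x + T x k) = 1 + op_norm_into_CK X K T)"

end

theory Submission
  imports Defs
begin

definition hb_good :: "'y::real_normed_vector \<Rightarrow> ('y \<times> real) set \<Rightarrow> bool" where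
  "hb_good z G \<longleftrightarrow> subspace G \<and> (\<forall>b. (0,b) \<in> G \<longrightarrow> b = 0) \<and> (z, norm z) \<in> G
     \<and> (\<forall>a b. (a,b) \<in> G \<longrightarrow> b \<le> norm a)"

lemma hb_functional:
  assumes "hb_good z G" "(a,b) \<in> G" "(a,c) \<in> G" shows "b = c"
proof -
  have "(a,b) - (a,c) \<in> G" using assms unfolding hb_good_def by (metis subspace_diff)
  then have "(0, b - c) \<in> G" by simp
  then show ?thesis using assms(1) unfolding hb_good_def by force
qed

lemma hb_step:
  fixes z :: "'y::real_normed_vector"
  assumes good: "hb_good z M" and v: "v \<notin> fst ` M"
  shows "\<exists>M'. hb_good z M' \<and> M \<subseteq> M' \<and> M' \<noteq> M"
proof -
  have sub: "subspace M" using good unfolding hb_good_def by auto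
  have bnd: "\<And>a b. (a,b) \<in> M \<Longrightarrow> b \<le> norm a" using good unfolding hb_good_def by auto
  have key: "b1 - norm (a1 - v) \<le> norm (a2 + v) - b2" if "(a1,b1) \<in> M" "(a2,b2) \<in> M" for a1 b1 a2 b2
  proof -
    have "(a1,b1) + (a2,b2) \<in> M" using subspace_add[OF sub that] .
    then have "b1 + b2 \<le> norm (a1 + a2)" using bnd by simp
    also have "norm (a1 + a2) = norm ((a1 - v) + (a2 + v))" by (simp add: algebra_simps)
    also have "\<dots> \<le> norm (a1 - v) + norm (a2 + v)" by (rule norm_triangle_ineq)
    finally show ?thesis by simp
  qed
  have "(0,0) \<in> M" using sub by (simp add: subspace_0 zero_prod_def[symmetric])
  define A where "A = (\<lambda>p. snd p - norm (fst p - v)) ` M"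
  define c where "c = Sup A"
  have Ane: "A \<noteq> {}" using \<open>(0,0) \<in> M\<close> unfolding A_def by auto
  have Abdd: "bdd_above A"
    unfolding A_def bdd_above_def using key[OF _ \<open>(0,0) \<in> M\<close>] by (auto intro!: exI[of _ "norm v"])
  have c1: "b - norm (a - v) \<le> c" if "(a,b) \<in> M" for a b
    unfolding c_def by (rule cSup_upper[OF _ Abdd]) (use that in \<open>force simp: A_def\<close>)
  have c2: "c \<le> norm (a + v) - b" if "(a,b) \<in> M" for a b
    unfolding c_def by (rule cSup_least[OF Ane]) (use key that in \<open>auto simp: A_def\<close>)
  define M' where "M' = {(a + t *\<^sub>R v, b + t * c) | a b t. (a,b) \<in> M}"
  have M'I: "\<And>a b t. (a,b) \<in> M \<Longrightarrow> (a + t *\<^sub>R v, b + t * c) \<in> M'" unfolding M'_def by blast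
  have MM': "M \<subseteq> M'" using M'I[of _ _ 0] by auto
  have vM': "(v, c) \<in> M'"
  proof -
    have "(v,c) = (0 + 1 *\<^sub>R v, 0 + 1 * c)" by simp
    then show ?thesis unfolding M'_def using \<open>(0,0) \<in> M\<close> by blast
  qed
  have neq: "M' \<noteq> M" using vM' v by force
  have subM': "subspace M'"
    unfolding subspace_def
  proof (intro conjI ballI allI)
    show "0 \<in> M'" using M'I[OF \<open>(0,0) \<in> M\<close>, of 0] by (simp add: zero_prod_def)
  next
    fix x y assume "x \<in> M'" "y \<in> M'"
    then obtain a b t a' b' t' where "x = (a + t *\<^sub>R v, b + t * c)" "(a,b) \<in> M"
      "y = (a' + t' *\<^sub>R v, b' + t' * c)" "(a',b') \<in> M" unfolding M'_def by auto
    moreover have "(a + a', b + b') \<in> M" using sub \<open>(a,b) \<in> M\<close> \<open>(a',b') \<in> M\<close>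
      by (metis add_Pair subspace_add)
    moreover have "x + y = ((a + a') + (t + t') *\<^sub>R v, (b + b') + (t + t') * c)"
      using calculation by (simp add: algebra_simps)
    ultimately show "x + y \<in> M'" using M'I by metis
  next
    fix r x assume "x \<in> M'"
    then obtain a b t where "x = (a + t *\<^sub>R v, b + t * c)" "(a,b) \<in> M" unfolding M'_def by auto
    moreover have "(r *\<^sub>R a, r * b) \<in> M" using sub \<open>(a,b) \<in> M\<close>
      by (metis scaleR_Pair real_scaleR_def subspace_scale)
    moreover have "r *\<^sub>R x = (r *\<^sub>R a + (r * t) *\<^sub>R v, r * b + (r * t) * c)"
      using calculation by (simp add: algebra_simps)
    ultimately show "r *\<^sub>R x \<in> M'" using M'I by metis
  qed
  have bndM': "b' \<le> norm a'" if ab': "(a',b') \<in> M'" for a' b'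
  proof -
    obtain a b t where eq: "a' = a + t *\<^sub>R v" "b' = b + t * c" and ab: "(a,b) \<in> M"
      using ab' unfolding M'_def by blast
    consider "t = 0" | "t > 0" | "t < 0" by linarith
    then show ?thesis
    proof cases
      case 1 then show ?thesis using eq bnd ab by simp
    next
      case 2
      have "((1/t) *\<^sub>R a, (1/t) * b) \<in> M" using sub ab
        by (metis scaleR_Pair real_scaleR_def subspace_scale)
      from c2[OF this] have "c \<le> norm ((1/t) *\<^sub>R a + v) - b / t" by simp
      then have "t * c \<le> t * (norm ((1/t) *\<^sub>R a + v) - b / t)" using 2 by (simp add: mult_left_mono)
      also have "\<dots> = norm (t *\<^sub>R ((1/t) *\<^sub>R a + v)) - b" using 2 by (simp add: right_diff_distrib)
      also have "t *\<^sub>R ((1/t) *\<^sub>R a + v) = a + t *\<^sub>R v" using 2 by (simp add: algebra_simps)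
      finally show ?thesis using eq by simp
    next
      case 3
      obtain r where tr: "t = - r" and r: "r > 0" using 3 by (intro that[of "- t"]) auto
      have "((1/r) *\<^sub>R a, (1/r) * b) \<in> M" using sub ab
        by (metis scaleR_Pair real_scaleR_def subspace_scale)
      from c1[OF this] have "b / r - norm ((1/r) *\<^sub>R a - v) \<le> c" by simp
      then have "r * (b / r - norm ((1/r) *\<^sub>R a - v)) \<le> r * c" using r by (simp add: mult_left_mono)
      moreover have "r * (b / r - norm ((1/r) *\<^sub>R a - v)) = b - norm (r *\<^sub>R ((1/r) *\<^sub>R a - v))"
      proof -
        have e1: "r * (b / r) = b" using r by simp
        have e2: "norm (r *\<^sub>R ((1/r) *\<^sub>R a - v)) = r * norm ((1/r) *\<^sub>R a - v)" using r by simp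
        show ?thesis unfolding right_diff_distrib e1 e2 ..
      qed
      moreover have "r *\<^sub>R ((1/r) *\<^sub>R a - v) = a + t *\<^sub>R v" using r tr by (simp add: scaleR_diff_right)
      ultimately have "b - norm (a + t *\<^sub>R v) \<le> r * c" by simp
      then show ?thesis using eq tr by simp
    qed
  qed
  have funM': "b = 0" if ab': "(0,b) \<in> M'" for b
  proof -
    obtain a b0 t where eq: "0 = a + t *\<^sub>R v" "b = b0 + t * c" and ab: "(a,b0) \<in> M"
      using ab' unfolding M'_def by blast
    have "t = 0"
    proof (rule ccontr)
      assume "t \<noteq> 0"
      have "((-1/t) *\<^sub>R a, (-1/t) * b0) \<in> M" using sub ab
        by (metis scaleR_Pair real_scaleR_def subspace_scale)
      moreover have "(-1/t) *\<^sub>R a = v"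
      proof -
        have "a = - (t *\<^sub>R v)" using eq(1) by (simp add: eq_neg_iff_add_eq_0)
        then show ?thesis using \<open>t \<noteq> 0\<close> by simp
      qed
      ultimately show False using v by force
    qed
    then show ?thesis using eq ab good unfolding hb_good_def by simp
  qed
  have "hb_good z M'" unfolding hb_good_def
    using subM' funM' bndM' MM' good unfolding hb_good_def by blast
  then show ?thesis using MM' neq by blast
qed

lemma hb_norming:
  fixes z :: "'y::real_normed_vector"
  shows "\<exists>k::'y \<Rightarrow>\<^sub>L real. norm k \<le> 1 \<and> blinfun_apply k z = norm z"
proof -
  define A where "A = {G. hb_good z G}"
  define G0 where "G0 = span {(z, norm z)}"
  have G0: "G0 \<in> A"
  proof -
    have "G0 = range (\<lambda>t. (t *\<^sub>R z, t * norm z))"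
      unfolding G0_def span_singleton by (auto simp: scaleR_Pair)
    moreover have "hb_good z (range (\<lambda>t. (t *\<^sub>R z, t * norm z)))"
      unfolding hb_good_def
    proof (intro conjI allI impI)
      show "subspace (range (\<lambda>t. (t *\<^sub>R z, t * norm z)))"
        using subspace_span[of "{(z, norm z)}"] unfolding span_singleton by (simp add: scaleR_Pair)
      show "(z, norm z) \<in> range (\<lambda>t. (t *\<^sub>R z, t * norm z))" by (auto intro!: image_eqI[of _ _ 1])
    next
      fix b assume "(0, b) \<in> range (\<lambda>t. (t *\<^sub>R z, t * norm z))"
      then show "b = 0" by auto
    next
      fix a b assume "(a, b) \<in> range (\<lambda>t. (t *\<^sub>R z, t * norm z))"
      then obtain t where "a = t *\<^sub>R z" "b = t * norm z" by auto
      then show "b \<le> norm a" by (simp add: mult_right_mono)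
    qed
    ultimately show ?thesis unfolding A_def by simp
  qed
  have "\<exists>M\<in>A. \<forall>X\<in>A. M \<subseteq> X \<longrightarrow> X = M"
  proof (rule Zorn_Lemma2, intro ballI)
    fix C assume C: "C \<in> chains A"
    show "\<exists>U\<in>A. \<forall>X\<in>C. X \<subseteq> U"
    proof (cases "C = {}")
      case True then show ?thesis using G0 by auto
    next
      case False
      have CA: "C \<subseteq> A" and ch: "chain\<^sub>\<subseteq> C" using C unfolding chains_def by auto
      have two: "\<exists>G\<in>C. p \<in> G \<and> q \<in> G" if pq: "p \<in> \<Union>C" "q \<in> \<Union>C" for p q
      proof -
        obtain G1 G2 where "G1 \<in> C" "G2 \<in> C" "p \<in> G1" "q \<in> G2" using pq by blast
        then show ?thesis using ch unfolding chain_subset_def by (metis subsetD)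
      qed
      have "hb_good z (\<Union>C)" unfolding hb_good_def
      proof (intro conjI allI impI)
        show "subspace (\<Union>C)" unfolding subspace_def
        proof (intro conjI ballI allI)
          obtain G where "G \<in> C" using False by auto
          moreover have "subspace G" using CA \<open>G \<in> C\<close> unfolding A_def hb_good_def by blast
          ultimately show "0 \<in> \<Union>C" using subspace_0 by blast
        next
          fix x y assume "x \<in> \<Union>C" "y \<in> \<Union>C"
          then obtain G where "G \<in> C" "x \<in> G" "y \<in> G" using two by blast
          moreover have "subspace G" using CA \<open>G \<in> C\<close> unfolding A_def hb_good_def by blast
          ultimately show "x + y \<in> \<Union>C" using subspace_add by blast
        next
          fix r x assume "x \<in> \<Union>C"
          then obtain G where "G \<in> C" "x \<in> G" by auto
          moreover have "subspace G" using CA \<open>G \<in> C\<close> unfolding A_def hb_good_def by blast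
          ultimately show "r *\<^sub>R x \<in> \<Union>C" using subspace_scale by blast
        qed
      next
        obtain G where "G \<in> C" using False by auto
        then show "(z, norm z) \<in> \<Union>C" using CA unfolding A_def hb_good_def by auto
      next
        fix b assume "(0, b) \<in> \<Union>C"
        then show "b = 0" using CA unfolding A_def hb_good_def by auto
      next
        fix a b assume "(a, b) \<in> \<Union>C"
        then show "b \<le> norm a" using CA unfolding A_def hb_good_def by auto
      qed
      then show ?thesis unfolding A_def by auto
    qed
  qed
  then obtain M where MA: "M \<in> A" and max: "\<And>X. X \<in> A \<Longrightarrow> M \<subseteq> X \<Longrightarrow> X = M" by blast
  have good: "hb_good z M" using MA unfolding A_def by simp
  have full: "\<exists>b. (a,b) \<in> M" for a
  proof (rule ccontr)
    assume "\<not> (\<exists>b. (a,b) \<in> M)"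
    then have "a \<notin> fst ` M" by force
    from hb_step[OF good this] max show False unfolding A_def by blast
  qed
  define k where "k a = (THE b. (a,b) \<in> M)" for a
  have kM: "(a, k a) \<in> M" for a
    unfolding k_def by (rule theI') (use full hb_functional[OF good] in blast)
  have kuniq: "k a = b" if "(a,b) \<in> M" for a b
    using hb_functional[OF good kM that] .
  have sub: "subspace M" using good unfolding hb_good_def by simp
  have ladd: "k (a + a') = k a + k a'" for a a'
    using kuniq[of "a + a'"] subspace_add[OF sub kM[of a] kM[of a']] by simp
  have lsc: "k (r *\<^sub>R a) = r * k a" for r a
    using kuniq[of "r *\<^sub>R a"] subspace_scale[OF sub kM[of a], of r] by simp
  have kb: "k a \<le> norm a" for a using kM good unfolding hb_good_def by blast
  have kabs: "\<bar>k a\<bar> \<le> norm a" for a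
    using kb[of a] kb[of "-a"] lsc[of "-1" a] by simp
  have lin: "linear k" by (rule linearI) (simp_all add: ladd lsc)
  have bl: "bounded_linear k"
    by (rule bounded_linear_intro[of _ 1]) (auto simp: ladd lsc kabs)
  show ?thesis
  proof (intro exI conjI)
    show "norm (Blinfun k) \<le> 1"
      by (rule norm_blinfun_bound) (use kabs bl in \<open>auto simp: bounded_linear_Blinfun_apply\<close>)
    show "blinfun_apply (Blinfun k) z = norm z"
      using bl kuniq good unfolding hb_good_def by (simp add: bounded_linear_Blinfun_apply)
  qed
qed

lemma ws_eq: "weak_star_topology = strong_operator_topology"
  unfolding weak_star_topology_def strong_operator_topology_def euclidean_product_topology ..

lemma ws_topspace [simp]: "topspace weak_star_topology = UNIV"
  by (simp add: ws_eq strong_operator_topology_topspace)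

lemma ws_eval_cont: "continuous_map weak_star_topology euclideanreal (\<lambda>k. blinfun_apply k y)"
  unfolding ws_eq by (rule strong_operator_topology_continuous_evaluation)

lemma ws_basic_open:
  assumes "finite W"
  shows "openin weak_star_topology {k. \<forall>w\<in>W. \<bar>blinfun_apply k w - blinfun_apply f w\<bar> < d}"
proof -
  have "openin strong_operator_topology {k. \<forall>i\<in>W. blinfun_apply k (id i) \<in> ball (blinfun_apply f i) d}"
    by (rule strong_operator_topology_basis) (use assms in auto)
  moreover have "{k. \<forall>i\<in>W. blinfun_apply k (id i) \<in> ball (blinfun_apply f i) d}
      = {k. \<forall>w\<in>W. \<bar>blinfun_apply k w - blinfun_apply f w\<bar> < d}"
    by (auto simp: dist_real_def abs_minus_commute)
  ultimately show ?thesis by (simp add: ws_eq)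
qed

lemma ws_open_basic:
  assumes "openin weak_star_topology Op" "k0 \<in> Op"
  shows "\<exists>W d. finite W \<and> d > 0 \<and> {k. \<forall>w\<in>W. \<bar>blinfun_apply k w - blinfun_apply k0 w\<bar> < d} \<subseteq> Op"
proof -
  obtain U where U: "openin (product_topology (\<lambda>_. euclideanreal) UNIV) U" and OU: "Op = blinfun_apply -` U \<inter> UNIV"
    using assms(1) unfolding weak_star_topology_def openin_pullback_topology by blast
  have "blinfun_apply k0 \<in> U" using assms(2) OU by auto
  then obtain V where fin: "finite {i. V i \<noteq> topspace euclideanreal}" and opV: "\<And>i. openin euclideanreal (V i)"
     and inV: "blinfun_apply k0 \<in> Pi\<^sub>E UNIV V" and sub: "Pi\<^sub>E UNIV V \<subseteq> U"
    using U unfolding openin_product_topology_alt by force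
  define W where "W = {i. V i \<noteq> UNIV}"
  have finW: "finite W" using fin unfolding W_def by simp
  have "\<forall>i\<in>W. \<exists>e>0. ball (blinfun_apply k0 i) e \<subseteq> V i"
    using opV inV by (auto simp: open_contains_ball PiE_iff)
  then obtain e where e: "\<And>i. i \<in> W \<Longrightarrow> e i > 0 \<and> ball (blinfun_apply k0 i) (e i) \<subseteq> V i"
    by metis
  define d where "d = (if W = {} then 1 else Min (e ` W))"
  have d: "d > 0" using e finW unfolding d_def by auto
  have dle: "d \<le> e i" if "i \<in> W" for i using finW that unfolding d_def by auto
  have "{k. \<forall>w\<in>W. \<bar>blinfun_apply k w - blinfun_apply k0 w\<bar> < d} \<subseteq> Op"
  proof
    fix k assume k: "k \<in> {k. \<forall>w\<in>W. \<bar>blinfun_apply k w - blinfun_apply k0 w\<bar> < d}"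
    have "blinfun_apply k i \<in> V i" for i
    proof (cases "i \<in> W")
      case True
      then have "\<bar>blinfun_apply k i - blinfun_apply k0 i\<bar> < e i" using k dle[OF True] by auto
      then show ?thesis using e[OF True] by (auto simp: dist_real_def abs_minus_commute)
    next
      case False then show ?thesis unfolding W_def by auto
    qed
    then have "blinfun_apply k \<in> Pi\<^sub>E UNIV V" by (auto simp: PiE_iff)
    then show "k \<in> Op" using sub OU by auto
  qed
  then show ?thesis using finW d by blast
qed

lemma compactin_pullback:
  assumes "compactin T (f ` S)" "S \<subseteq> A"
  shows "compactin (pullback_topology A f T) S"
  unfolding compactin_def
proof (intro conjI allI impI)
  show "S \<subseteq> topspace (pullback_topology A f T)"
    using assms compactin_subset_topspace unfolding topspace_pullback_topology by fastforce
next
  fix \<U> assume H: "(\<forall>B\<in>\<U>. openin (pullback_topology A f T) B) \<and> S \<subseteq> \<Union>\<U>"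
  have "\<forall>B\<in>\<U>. \<exists>V. openin T V \<and> B = f -` V \<inter> A" using H unfolding openin_pullback_topology by blast
  then obtain V where V: "\<And>B. B \<in> \<U> \<Longrightarrow> openin T (V B) \<and> B = f -` (V B) \<inter> A" by metis
  have "f ` S \<subseteq> \<Union>(V ` \<U>)" using H V by fastforce
  moreover have "\<forall>C\<in>V ` \<U>. openin T C" using V by auto
  ultimately obtain \<F> where F: "finite \<F>" "\<F> \<subseteq> V ` \<U>" "f ` S \<subseteq> \<Union>\<F>"
    using assms(1) unfolding compactin_def by meson
  then obtain \<G> where G: "\<G> \<subseteq> \<U>" "finite \<G>" "\<F> = V ` \<G>" by (meson finite_subset_image)
  show "\<exists>\<F>. finite \<F> \<and> \<F> \<subseteq> \<U> \<and> S \<subseteq> \<Union>\<F>"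
  proof (intro exI conjI)
    show "S \<subseteq> \<Union>\<G>"
    proof
      fix s assume "s \<in> S"
      then obtain B where "B \<in> \<G>" "f s \<in> V B" using F G by auto
      then show "s \<in> \<Union>\<G>" using V G \<open>s \<in> S\<close> assms(2) by blast
    qed
  qed (use G in auto)
qed

lemma abs_iv: "(\<bar>a::real\<bar> \<le> b) \<longleftrightarrow> a \<in> {-b..b}" by auto

lemma dual_ball_eq: "dual_ball = {k. \<forall>y. \<bar>blinfun_apply k y\<bar> \<le> norm y}"
proof (intro set_eqI iffI)
  fix k :: "'a \<Rightarrow>\<^sub>L real" assume "k \<in> dual_ball"
  then have "norm k \<le> 1" unfolding dual_ball_def by simp
  have "\<bar>blinfun_apply k y\<bar> \<le> norm y" for y
  proof -
    have "\<bar>blinfun_apply k y\<bar> \<le> norm y * norm k" using norm_blinfun[of k y] by (simp add: mult.commute)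
    also have "\<dots> \<le> norm y" using \<open>norm k \<le> 1\<close> by (simp add: mult_left_le)
    finally show ?thesis .
  qed
  then show "k \<in> {k. \<forall>y. \<bar>blinfun_apply k y\<bar> \<le> norm y}" by simp
next
  fix k :: "'a \<Rightarrow>\<^sub>L real" assume "k \<in> {k. \<forall>y. \<bar>blinfun_apply k y\<bar> \<le> norm y}"
  then have "norm k \<le> 1" by (intro norm_blinfun_bound) auto
  then show "k \<in> dual_ball" unfolding dual_ball_def by simp
qed

lemma dual_ball_apply: "k \<in> dual_ball \<Longrightarrow> \<bar>blinfun_apply k y\<bar> \<le> norm y"
  using dual_ball_eq by blast

lemma closedin_dual_ball: "closedin weak_star_topology (dual_ball :: ('y::real_normed_vector \<Rightarrow>\<^sub>L real) set)"
proof -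
  have "(dual_ball :: ('y \<Rightarrow>\<^sub>L real) set) = (\<Inter>y. {k. blinfun_apply k y \<in> {-norm y..norm y}})"
    unfolding dual_ball_eq abs_iv by auto
  moreover have "closedin weak_star_topology {k. blinfun_apply k y \<in> {-norm y..norm y}}" for y
    using closedin_continuous_map_preimage[OF ws_eval_cont[of y], of "{-norm y..norm y}"] by simp
  moreover have "closedin weak_star_topology (\<Inter>y. {k::'y \<Rightarrow>\<^sub>L real. blinfun_apply k y \<in> {-norm y..norm y}})"
    by (rule closedin_Inter) (use calculation in auto)
  ultimately show ?thesis by simp
qed

lemma compact_dual_ball: "compactin weak_star_topology (dual_ball :: ('y::real_normed_vector \<Rightarrow>\<^sub>L real) set)"
proof -
  define Q :: "('y \<Rightarrow> real) set" where
    "Q = {f. (\<forall>a b. f (a + b) = f a + f b) \<and> (\<forall>r a. f (r *\<^sub>R a) = r * f a) \<and> (\<forall>y. f y \<in> {-norm y..norm y})}"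
  have img: "blinfun_apply ` dual_ball = Q"
  proof (intro set_eqI iffI)
    fix f assume "f \<in> blinfun_apply ` (dual_ball :: ('y \<Rightarrow>\<^sub>L real) set)"
    then obtain k :: "'y \<Rightarrow>\<^sub>L real" where "k \<in> dual_ball" "f = blinfun_apply k" by auto
    then show "f \<in> Q" unfolding Q_def using dual_ball_apply[of k]
      by (auto simp: blinfun.add_right blinfun.scaleR_right abs_iv)
  next
    fix f assume f: "f \<in> Q"
    have bl: "bounded_linear f"
      by (rule bounded_linear_intro[of _ 1]) (use f in \<open>auto simp: Q_def abs_iv\<close>)
    have "Blinfun f \<in> dual_ball" unfolding dual_ball_eq using f bl
      by (auto simp: Q_def bounded_linear_Blinfun_apply abs_iv)
    moreover have "blinfun_apply (Blinfun f) = f" using bl by (simp add: bounded_linear_Blinfun_apply)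
    ultimately show "f \<in> blinfun_apply ` dual_ball" by force
  qed
  have "Q \<subseteq> Pi\<^sub>E UNIV (\<lambda>y. {-norm y..norm y})" unfolding Q_def by auto
  moreover have "compact (Pi\<^sub>E UNIV (\<lambda>y::'y. {-norm y..norm y}))"
  proof -
    have "compactin (product_topology (\<lambda>_. euclideanreal) UNIV) (Pi\<^sub>E UNIV (\<lambda>y::'y. {-norm y..norm y}))"
      by (subst compactin_PiE) auto
    then show ?thesis using compactin_euclidean_iff euclidean_product_topology by metis
  qed
  moreover have "closed Q"
  proof -
    have eqQ: "Q = (\<Inter>a. \<Inter>b. {f. f (a + b) = f a + f b}) \<inter> (\<Inter>r. \<Inter>a. {f. f (r *\<^sub>R a) = r * f a})
        \<inter> (\<Inter>y. {f. f y \<in> {-norm y..norm y}})" unfolding Q_def by auto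
    have c1: "closed {f::'y\<Rightarrow>real. f (a + b) = f a + f b}" for a b
      by (intro closed_Collect_eq continuous_intros) auto
    have c2: "closed {f::'y\<Rightarrow>real. f (r *\<^sub>R a) = r * f a}" for r a
      by (intro closed_Collect_eq continuous_intros) auto
    have c3: "closed {f::'y\<Rightarrow>real. f y \<in> {-norm y..norm y}}" for y
      using closed_vimage[of "{-norm y..norm y}" "\<lambda>f::'y\<Rightarrow>real. f y"] by (simp add: vimage_def)
    have d1: "closed (\<Inter>a. \<Inter>b. {f::'y\<Rightarrow>real. f (a + b) = f a + f b})"
      by (intro closed_INT ballI c1)
    have d2: "closed (\<Inter>r. \<Inter>a. {f::'y\<Rightarrow>real. f (r *\<^sub>R a) = r * f a})"
      by (intro closed_INT ballI c2)
    have d3: "closed (\<Inter>y. {f::'y\<Rightarrow>real. f y \<in> {-norm y..norm y}})"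
      by (intro closed_INT ballI c3)
    show ?thesis unfolding eqQ by (intro closed_Int d1 d2 d3)
  qed
  ultimately have "compact Q" using compact_Int_closed[of "Pi\<^sub>E UNIV (\<lambda>y::'y. {-norm y..norm y})" Q]
    by (simp add: Int_absorb1)
  then have "compactin (product_topology (\<lambda>_. euclideanreal) UNIV) (blinfun_apply ` (dual_ball :: ('y \<Rightarrow>\<^sub>L real) set))"
    unfolding img using compactin_euclidean_iff euclidean_product_topology by metis
  then show ?thesis unfolding weak_star_topology_def by (rule compactin_pullback) simp
qed

lemma ext_closure_sub: "ext_closure_dual_ball \<subseteq> dual_ball"
  unfolding ext_closure_dual_ball_def
  by (rule closure_of_minimal[OF _ closedin_dual_ball]) (auto simp: extreme_point_of_def)

lemma compact_ext_closure: "compactin weak_star_topology ext_closure_dual_ball"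
  by (rule closed_compactin[OF compact_dual_ball ext_closure_sub])
     (simp add: ext_closure_dual_ball_def closedin_closure_of)

lemma ws_attains_max:
  assumes "compactin weak_star_topology S" "S \<noteq> {}"
  shows "\<exists>m\<in>S. \<forall>k\<in>S. blinfun_apply k w \<le> blinfun_apply m w"
proof -
  have "compactin euclideanreal ((\<lambda>k. blinfun_apply k w) ` S)"
    by (rule image_compactin[OF assms(1) ws_eval_cont])
  then have "compact ((\<lambda>k. blinfun_apply k w) ` S)" by (simp add: compactin_euclidean_iff)
  from compact_attains_sup[OF this] assms(2) show ?thesis by auto
qed

lemma ws_attains_min_cont:
  assumes "compactin weak_star_topology S" "S \<noteq> {}" "continuous_map weak_star_topology euclideanreal d"
  shows "\<exists>p\<in>S. \<forall>k\<in>S. d p \<le> d k"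
proof -
  have "compactin euclideanreal (d ` S)" by (rule image_compactin[OF assms(1) assms(3)])
  then have "compact (d ` S)" by (simp add: compactin_euclidean_iff)
  from compact_attains_inf[OF this] assms(2) show ?thesis by auto
qed

definition isface :: "('y::real_normed_vector \<Rightarrow>\<^sub>L real) set \<Rightarrow> bool" where
  "isface F \<longleftrightarrow> F \<subseteq> dual_ball \<and>
     (\<forall>a\<in>dual_ball. \<forall>b\<in>dual_ball. \<forall>x\<in>F. x \<in> open_segment a b \<longrightarrow> a \<in> F \<and> b \<in> F)"

lemma isface_ball: "isface dual_ball" unfolding isface_def by auto

lemma isface_argmax:
  assumes "isface F"
  shows "isface {k\<in>F. \<forall>k'\<in>F. blinfun_apply k' w \<le> blinfun_apply k w}"
proof -
  let ?F = "{k\<in>F. \<forall>k'\<in>F. blinfun_apply k' w \<le> blinfun_apply k w}"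
  have 1: "?F \<subseteq> dual_ball" using assms unfolding isface_def by auto
  have 2: "a \<in> ?F \<and> b \<in> ?F" if ab: "a \<in> dual_ball" "b \<in> dual_ball" and x: "x \<in> ?F"
    and seg: "x \<in> open_segment a b" for a b x
  proof -
    have xF: "x \<in> F" using x by auto
    have aF: "a \<in> F" and bF: "b \<in> F" using assms ab xF seg unfolding isface_def by blast+
    obtain u where u: "0 < u" "u < 1" "x = (1 - u) *\<^sub>R a + u *\<^sub>R b" using seg by (auto simp: in_segment)
    have xw: "blinfun_apply x w = (1 - u) * blinfun_apply a w + u * blinfun_apply b w"
      using u(3) by (simp add: blinfun.add_left blinfun.scaleR_left)
    have le: "blinfun_apply a w \<le> blinfun_apply x w" "blinfun_apply b w \<le> blinfun_apply x w" using x aF bF by auto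
    define p where "p = blinfun_apply x w - blinfun_apply a w"
    define q where "q = blinfun_apply x w - blinfun_apply b w"
    have p: "p \<ge> 0" and q: "q \<ge> 0" using le unfolding p_def q_def by auto
    have "(1 - u) * p + u * q = 0" unfolding p_def q_def xw by (simp add: algebra_simps)
    moreover have "(1 - u) * p \<ge> 0" "u * q \<ge> 0" using p q u by auto
    ultimately have "(1 - u) * p = 0" "u * q = 0" by linarith+
    then have "p = 0" "q = 0" using u by auto
    then have "blinfun_apply a w = blinfun_apply x w" "blinfun_apply b w = blinfun_apply x w"
      unfolding p_def q_def by simp_all
    then show ?thesis using x aF bF by auto
  qed
  show ?thesis unfolding isface_def using 1 2 by blast
qed

lemma closedin_ge: "closedin weak_star_topology {k. c \<le> blinfun_apply k w}"
  using closedin_continuous_map_preimage[OF ws_eval_cont[of w], of "{c..}"] by simp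

lemma closedin_le: "closedin weak_star_topology {k. blinfun_apply k w \<le> c}"
  using closedin_continuous_map_preimage[OF ws_eval_cont[of w], of "{..c}"] by simp

lemma closedin_argmax:
  assumes "closedin weak_star_topology F"
  shows "closedin weak_star_topology {k\<in>F. \<forall>k'\<in>F. blinfun_apply k' w \<le> blinfun_apply k w}"
proof (cases "F = {}")
  case True then show ?thesis by simp
next
  case False
  have "{k\<in>F. \<forall>k'\<in>F. blinfun_apply k' w \<le> blinfun_apply k w} = F \<inter> \<Inter>((\<lambda>k'. {k. blinfun_apply k' w \<le> blinfun_apply k w}) ` F)"
    by auto
  moreover have "closedin weak_star_topology (\<Inter>((\<lambda>k'. {k. blinfun_apply k' w \<le> blinfun_apply k w}) ` F))"
    by (rule closedin_Inter) (use False closedin_ge in auto)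
  ultimately show ?thesis using assms by (simp add: closedin_Int)
qed

lemma ws_compact_sub:
  assumes "closedin weak_star_topology F" "F \<subseteq> (dual_ball :: ('y::real_normed_vector \<Rightarrow>\<^sub>L real) set)"
  shows "compactin weak_star_topology F"
  using closed_compactin[OF compact_dual_ball assms(2,1)] .

lemma face_extreme:
  fixes F0 :: "('y::real_normed_vector \<Rightarrow>\<^sub>L real) set"
  assumes F0: "isface F0" "closedin weak_star_topology F0" "F0 \<noteq> {}"
  shows "\<exists>e\<in>F0. e extreme_point_of dual_ball"
proof -
  define \<A> where "\<A> = {G. G \<subseteq> F0 \<and> G \<noteq> {} \<and> closedin weak_star_topology G \<and> isface G}"
  define \<C> where "\<C> = uminus ` \<A>"
  have "\<exists>M\<in>\<C>. \<forall>X\<in>\<C>. M \<subseteq> X \<longrightarrow> X = M"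
  proof (rule subset_Zorn_nonempty)
    show "\<C> \<noteq> {}" using F0 unfolding \<C>_def \<A>_def by auto
  next
    fix \<C>' assume ne: "\<C>' \<noteq> {}" and ch: "subset.chain \<C> \<C>'"
    define \<G> where "\<G> = uminus ` \<C>'"
    have GA: "\<G> \<subseteq> \<A>" using ch unfolding \<G>_def \<C>_def subset_chain_def by auto
    have Gch: "subset.chain \<A> \<G>"
      unfolding subset_chain_def
    proof (intro conjI ballI GA)
      fix X Y assume "X \<in> \<G>" "Y \<in> \<G>"
      then obtain X' Y' where "X' \<in> \<C>'" "Y' \<in> \<C>'" "X = - X'" "Y = - Y'" unfolding \<G>_def by auto
      then show "X \<subseteq> Y \<or> Y \<subseteq> X" using ch unfolding subset_chain_def by auto
    qed
    have Gne: "\<G> \<noteq> {}" using ne unfolding \<G>_def by auto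
    have Un: "\<Union>\<C>' = - \<Inter>\<G>" unfolding \<G>_def by auto
    have "\<Inter>\<G> \<in> \<A>"
    proof -
      have sub: "\<Inter>\<G> \<subseteq> F0" using GA Gne unfolding \<A>_def by blast
      have cl: "closedin weak_star_topology (\<Inter>\<G>)"
        by (rule closedin_Inter[OF Gne]) (use GA in \<open>auto simp: \<A>_def\<close>)
      have fc: "isface (\<Inter>\<G>)"
        using GA Gne unfolding \<A>_def isface_def by (auto; blast)
      have cF0: "compactin weak_star_topology F0"
        using ws_compact_sub[OF F0(2)] F0(1) unfolding isface_def by blast
      have "F0 \<inter> \<Inter>\<G> \<noteq> {}"
        unfolding compactin_fip[THEN iffD1, OF cF0, THEN conjunct2, rule_format]
      proof (rule compactin_fip[THEN iffD1, OF cF0, THEN conjunct2, rule_format], intro conjI allI impI)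
        show "\<forall>C\<in>\<G>. closedin weak_star_topology C" using GA unfolding \<A>_def by auto
      next
        fix \<F> assume F: "finite \<F> \<and> \<F> \<subseteq> \<G>"
        show "F0 \<inter> \<Inter>\<F> \<noteq> {}"
        proof (cases "\<F> = {}")
          case True then show ?thesis using F0 by simp
        next
          case False
          have "subset.chain \<A> \<F>" using Gch F unfolding subset_chain_def by blast
          then have "\<Inter>\<F> \<in> \<F>" using Inter_in_chain F False by blast
          then have "\<Inter>\<F> \<in> \<A>" using F GA by blast
          then show ?thesis unfolding \<A>_def by auto
        qed
      qed
      then have "\<Inter>\<G> \<noteq> {}" by auto
      then show ?thesis unfolding \<A>_def using sub cl fc by auto
    qed
    then show "\<Union>\<C>' \<in> \<C>" unfolding Un \<C>_def by auto
  qed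
  then obtain M where MC: "M \<in> \<C>" and Mmax: "\<And>X. X \<in> \<C> \<Longrightarrow> M \<subseteq> X \<Longrightarrow> X = M" by blast
  define G where "G = - M"
  have GA: "G \<in> \<A>" using MC unfolding G_def \<C>_def by auto
  have Gmin: "\<And>H. H \<in> \<A> \<Longrightarrow> H \<subseteq> G \<Longrightarrow> H = G"
  proof -
    fix H assume "H \<in> \<A>" "H \<subseteq> G"
    then have "-H \<in> \<C>" "M \<subseteq> -H" unfolding \<C>_def G_def by auto
    then have "-H = M" using Mmax by blast
    then show "H = G" unfolding G_def by auto
  qed
  obtain e where eG: "e \<in> G" using GA unfolding \<A>_def by auto
  have single: "G = {e}"
  proof (rule ccontr)
    assume "G \<noteq> {e}"
    then obtain e' where e': "e' \<in> G" "e' \<noteq> e" using eG by auto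
    then obtain w where w: "blinfun_apply e w \<noteq> blinfun_apply e' w" using blinfun_eqI by metis
    define H where "H = {k\<in>G. \<forall>k'\<in>G. blinfun_apply k' w \<le> blinfun_apply k w}"
    have Gcl: "closedin weak_star_topology G" and Gf: "isface G" and GF0: "G \<subseteq> F0"
      using GA unfolding \<A>_def by auto
    have Gc: "compactin weak_star_topology G" using ws_compact_sub[OF Gcl] Gf unfolding isface_def by blast
    obtain m where m: "m \<in> G" "\<forall>k\<in>G. blinfun_apply k w \<le> blinfun_apply m w" using ws_attains_max[OF Gc] eG by blast
    have HA: "H \<in> \<A>" unfolding \<A>_def H_def
      using m GF0 closedin_argmax[OF Gcl, of w] isface_argmax[OF Gf, of w] by auto
    have "H \<noteq> G"
    proof
      assume "H = G"
      then have "blinfun_apply e' w \<le> blinfun_apply e w" "blinfun_apply e w \<le> blinfun_apply e' w"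
        using eG e' unfolding H_def by blast+
      then show False using w by simp
    qed
    moreover have "H \<subseteq> G" unfolding H_def by auto
    ultimately show False using Gmin HA by blast
  qed
  have "e extreme_point_of dual_ball"
    unfolding extreme_point_of_def
  proof (intro conjI ballI)
    show "e \<in> dual_ball" using GA eG unfolding \<A>_def isface_def by auto
  next
    fix a b :: "'y \<Rightarrow>\<^sub>L real" assume ab: "a \<in> dual_ball" "b \<in> dual_ball"
    show "e \<notin> open_segment a b"
    proof
      assume "e \<in> open_segment a b"
      then have "a \<in> G \<and> b \<in> G" using GA ab eG unfolding \<A>_def isface_def by blast
      then have "a = e" "b = e" using single by auto
      with \<open>e \<in> open_segment a b\<close> show False by simp
    qed
  qed
  then show ?thesis using GA eG unfolding \<A>_def by auto
qed

lemma extreme_max: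
  fixes z :: "'y::real_normed_vector"
  shows "\<exists>e. e extreme_point_of (dual_ball :: ('y \<Rightarrow>\<^sub>L real) set) \<and> (\<forall>k\<in>dual_ball. blinfun_apply k z \<le> blinfun_apply e z)"
proof -
  define F0 where "F0 = {k\<in>(dual_ball :: ('y \<Rightarrow>\<^sub>L real) set). \<forall>k'\<in>dual_ball. blinfun_apply k' z \<le> blinfun_apply k z}"
  have "isface F0" unfolding F0_def by (rule isface_argmax[OF isface_ball])
  moreover have "closedin weak_star_topology F0" unfolding F0_def by (rule closedin_argmax[OF closedin_dual_ball])
  moreover have "F0 \<noteq> {}"
    using ws_attains_max[OF compact_dual_ball, of z] unfolding F0_def dual_ball_def by auto
  ultimately obtain e where "e \<in> F0" "e extreme_point_of dual_ball" using face_extreme by blast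
  then show ?thesis unfolding F0_def by auto
qed

lemma extreme_norming:
  fixes z :: "'y::real_normed_vector"
  shows "\<exists>e. e extreme_point_of (dual_ball :: ('y \<Rightarrow>\<^sub>L real) set) \<and> blinfun_apply e z = norm z"
proof -
  obtain e where e: "e extreme_point_of (dual_ball :: ('y \<Rightarrow>\<^sub>L real) set)" "\<forall>k\<in>dual_ball. blinfun_apply k z \<le> blinfun_apply e z"
    using extreme_max by blast
  obtain k :: "'y \<Rightarrow>\<^sub>L real" where k: "norm k \<le> 1" "blinfun_apply k z = norm z" using hb_norming by blast
  have "norm z \<le> blinfun_apply e z" using e(2) k unfolding dual_ball_def by force
  moreover have "blinfun_apply e z \<le> norm z" using e(1) dual_ball_apply[of e z] unfolding extreme_point_of_def by auto
  ultimately show ?thesis using e by force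
qed

lemma ws_cont_coord:
  "continuous_map T weak_star_topology f \<longleftrightarrow> (\<forall>x. continuous_map T euclideanreal (\<lambda>y. blinfun_apply (f y) x))"
  by (simp add: ws_eq continuous_on_strong_operator_topo_iff_coordinatewise)

lemma ws_separation:
  fixes C :: "('y::real_normed_vector \<Rightarrow>\<^sub>L real) set"
  assumes cC: "compactin weak_star_topology C" and cv: "convex C" and eC: "e \<notin> C"
  shows "\<exists>y c. c < blinfun_apply e y \<and> (\<forall>k\<in>C. blinfun_apply k y \<le> c)"
proof (cases "C = {}")
  case True then show ?thesis by (intro exI[of _ 0] exI[of _ "-1"]) auto
next
  case False
  define U where "U w = {k. blinfun_apply k w \<noteq> blinfun_apply e w}" for w
  have opU: "openin weak_star_topology (U w)" for w
  proof -
    have "openin euclideanreal (- {blinfun_apply e w})" by (simp add: open_Compl)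
    from openin_continuous_map_preimage[OF ws_eval_cont[of w] this] show ?thesis
      unfolding U_def by (simp add: vimage_def)
  qed
  have cov: "C \<subseteq> \<Union>(range U)"
  proof
    fix k assume "k \<in> C"
    then have "k \<noteq> e" using eC by auto
    then obtain w where "blinfun_apply k w \<noteq> blinfun_apply e w" using blinfun_eqI by metis
    then show "k \<in> \<Union>(range U)" unfolding U_def by auto
  qed
  obtain \<F> where F: "finite \<F>" "\<F> \<subseteq> range U" "C \<subseteq> \<Union>\<F>"
    using cC cov opU unfolding compactin_def by (metis imageE)
  obtain W where W: "finite W" "\<F> = U ` W" using F by (meson finite_subset_image subset_UNIV)
  define d where "d k = (\<Sum>w\<in>W. (blinfun_apply k w - blinfun_apply e w)^2)" for k
  have contd: "continuous_map weak_star_topology euclideanreal d"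
    unfolding d_def by (intro continuous_map_sum continuous_map_real_pow continuous_map_diff ws_eval_cont W(1)) auto
  obtain p where pC: "p \<in> C" and pmin: "\<And>k. k \<in> C \<Longrightarrow> d p \<le> d k"
    using ws_attains_min_cont[OF cC False contd] by blast
  define a where "a w = blinfun_apply p w - blinfun_apply e w" for w
  define y where "y = (\<Sum>w\<in>W. (blinfun_apply e w - blinfun_apply p w) *\<^sub>R w)"
  have ky: "blinfun_apply k y = (\<Sum>w\<in>W. (blinfun_apply e w - blinfun_apply p w) * blinfun_apply k w)" for k
    unfolding y_def by (simp add: blinfun.sum_right blinfun.scaleR_right)
  have dpos: "d p > 0"
  proof -
    obtain w where w: "w \<in> W" "p \<in> U w" using F W pC by auto
    then have "0 < (blinfun_apply p w - blinfun_apply e w)^2" unfolding U_def by auto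
    also have "\<dots> \<le> d p" unfolding d_def by (rule member_le_sum) (use w W in auto)
    finally show ?thesis .
  qed
  have var: "0 \<le> (\<Sum>w\<in>W. a w * (blinfun_apply q w - blinfun_apply p w))" if qC: "q \<in> C" for q
  proof (rule ccontr)
    define b where "b w = blinfun_apply q w - blinfun_apply p w" for w
    define S1 where "S1 = (\<Sum>w\<in>W. a w * b w)"
    define S2 where "S2 = (\<Sum>w\<in>W. (b w)^2)"
    assume "\<not> 0 \<le> (\<Sum>w\<in>W. a w * (blinfun_apply q w - blinfun_apply p w))"
    then have S1neg: "S1 < 0" unfolding S1_def b_def by simp
    have S2nn: "S2 \<ge> 0" unfolding S2_def by (intro sum_nonneg) auto
    have key: "0 \<le> 2 * S1 + t * S2" if t: "0 < t" "t \<le> 1" for t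
    proof -
      have "(1 - t) *\<^sub>R p + t *\<^sub>R q \<in> C" using cv pC qC t unfolding convex_alt by auto
      then have "d p \<le> d ((1 - t) *\<^sub>R p + t *\<^sub>R q)" by (rule pmin)
      also have "d ((1 - t) *\<^sub>R p + t *\<^sub>R q) = (\<Sum>w\<in>W. (a w + t * b w)^2)"
        unfolding d_def a_def b_def by (intro sum.cong refl) (simp add: blinfun.add_left blinfun.diff_left blinfun.scaleR_left algebra_simps)
      also have "\<dots> = d p + 2 * t * S1 + t^2 * S2"
      proof -
        have "(\<Sum>w\<in>W. (a w + t * b w)^2) = (\<Sum>w\<in>W. (a w)^2 + (2 * t) * (a w * b w) + t^2 * (b w)^2)"
          by (intro sum.cong refl) (simp add: power2_sum power_mult_distrib algebra_simps)
        also have "\<dots> = (\<Sum>w\<in>W. (a w)^2) + (2 * t) * S1 + t^2 * S2"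
          unfolding S1_def S2_def by (simp add: sum.distrib sum_distrib_left)
        also have "(\<Sum>w\<in>W. (a w)^2) = d p" unfolding d_def a_def ..
        finally show ?thesis by simp
      qed
      finally have "0 \<le> t * (2 * S1 + t * S2)" by (simp add: power2_eq_square algebra_simps)
      then show ?thesis using t by (simp add: zero_le_mult_iff)
    qed
    define t where "t = min 1 ((- S1) / (S2 + 1))"
    have tpos: "(- S1) / (S2 + 1) > 0" using S1neg S2nn by (intro divide_pos_pos) auto
    have t: "0 < t" "t \<le> 1" unfolding t_def using tpos by auto
    have "t * S2 \<le> ((- S1) / (S2 + 1)) * S2" unfolding t_def using S2nn by (intro mult_right_mono) auto
    also have "\<dots> < - S1"
    proof -
      have "((- S1) / (S2 + 1)) * S2 = (- S1) * (S2 / (S2 + 1))" by simp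
      also have "\<dots> < (- S1) * 1" using S1neg S2nn by (intro mult_strict_left_mono) auto
      finally show ?thesis by simp
    qed
    finally have "2 * S1 + t * S2 < 0" using S1neg by linarith
    with key[OF t] show False by simp
  qed
  show ?thesis
  proof (intro exI conjI ballI)
    have "blinfun_apply e y - blinfun_apply p y = (\<Sum>w\<in>W. (a w)^2)"
      unfolding ky a_def by (simp add: sum_subtractf[symmetric] power2_eq_square algebra_simps)
    also have "\<dots> = d p" unfolding d_def a_def ..
    finally show "blinfun_apply p y < blinfun_apply e y" using dpos by simp
  next
    fix q assume "q \<in> C"
    have "blinfun_apply q y - blinfun_apply p y = - (\<Sum>w\<in>W. a w * (blinfun_apply q w - blinfun_apply p w))"
      unfolding ky a_def by (simp add: sum_subtractf[symmetric] sum_negf[symmetric] algebra_simps)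
    then show "blinfun_apply q y \<le> blinfun_apply p y" using var[OF \<open>q \<in> C\<close>] by simp
  qed
qed

lemma hull_union_two_rv:
  fixes S T :: "'a::real_vector set"
  assumes cS: "convex S" and cT: "convex T" and "S \<noteq> {}" "T \<noteq> {}"
  shows "convex hull (S \<union> T) = {(1 - t) *\<^sub>R s + t *\<^sub>R u | t s u. t \<in> {0..1} \<and> s \<in> S \<and> u \<in> T}"
proof -
  define R where "R = {(1 - t) *\<^sub>R s + t *\<^sub>R u | t s u. t \<in> {0..1} \<and> s \<in> S \<and> u \<in> T}"
  obtain s0 u0 where s0: "s0 \<in> S" and u0: "u0 \<in> T" using assms by auto
  have RI: "(1 - t) *\<^sub>R s + t *\<^sub>R u \<in> R" if "t \<in> {0..1}" "s \<in> S" "u \<in> T" for t s u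
    unfolding R_def using that by blast
  have sub1: "S \<union> T \<subseteq> R"
  proof
    fix x assume "x \<in> S \<union> T"
    then show "x \<in> R"
    proof
      assume "x \<in> S" then show ?thesis using RI[of 0 x u0] u0 by simp
    next
      assume "x \<in> T" then show ?thesis using RI[of 1 s0 x] s0 by simp
    qed
  qed
  have cR: "convex R"
    unfolding convex_alt
  proof (intro ballI allI impI)
    fix x y and l :: real assume x: "x \<in> R" and y: "y \<in> R" and l: "0 \<le> l \<and> l \<le> 1"
    obtain t1 s1 u1 where 1: "x = (1 - t1) *\<^sub>R s1 + t1 *\<^sub>R u1" "t1 \<in> {0..1}" "s1 \<in> S" "u1 \<in> T"
      using x unfolding R_def by blast
    obtain t2 s2 u2 where 2: "y = (1 - t2) *\<^sub>R s2 + t2 *\<^sub>R u2" "t2 \<in> {0..1}" "s2 \<in> S" "u2 \<in> T"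
      using y unfolding R_def by blast
    define a1 where "a1 = (1 - l) * (1 - t1)"
    define a2 where "a2 = l * (1 - t2)"
    define b1 where "b1 = (1 - l) * t1"
    define b2 where "b2 = l * t2"
    have nn: "a1 \<ge> 0" "a2 \<ge> 0" "b1 \<ge> 0" "b2 \<ge> 0" using l 1(2) 2(2) unfolding a1_def a2_def b1_def b2_def by auto
    have sum1: "a1 + a2 + (b1 + b2) = 1" unfolding a1_def a2_def b1_def b2_def by (simp add: algebra_simps)
    have z: "(1 - l) *\<^sub>R x + l *\<^sub>R y = (a1 *\<^sub>R s1 + a2 *\<^sub>R s2) + (b1 *\<^sub>R u1 + b2 *\<^sub>R u2)"
      unfolding 1(1) 2(1) a1_def a2_def b1_def b2_def by (simp add: algebra_simps)
    show "(1 - l) *\<^sub>R x + l *\<^sub>R y \<in> R"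
    proof (cases "a1 + a2 = 0")
      case True
      then have "a1 = 0" "a2 = 0" using nn by auto
      moreover have "b1 *\<^sub>R u1 + b2 *\<^sub>R u2 \<in> T" using convexD[OF cT 1(4) 2(4) nn(3,4)] sum1 True by simp
      ultimately show ?thesis using RI[of 1 s1 "b1 *\<^sub>R u1 + b2 *\<^sub>R u2"] 1(3) z by simp
    next
      case False
      show ?thesis
      proof (cases "b1 + b2 = 0")
        case True
        then have "b1 = 0" "b2 = 0" using nn by auto
        moreover have "a1 *\<^sub>R s1 + a2 *\<^sub>R s2 \<in> S" using convexD[OF cS 1(3) 2(3) nn(1,2)] sum1 True by simp
        ultimately show ?thesis using RI[of 0 "a1 *\<^sub>R s1 + a2 *\<^sub>R s2" u1] 1(4) z by simp
      next
        case False2: False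
        define al where "al = a1 + a2"
        define be where "be = b1 + b2"
        have al: "al > 0" using False nn unfolding al_def by auto
        have be: "be > 0" using False2 nn unfolding be_def by auto
        have sS: "(a1 / al) *\<^sub>R s1 + (a2 / al) *\<^sub>R s2 \<in> S"
          by (rule convexD[OF cS 1(3) 2(3)]) (use nn al in \<open>auto simp: al_def add_divide_distrib[symmetric]\<close>)
        have uT: "(b1 / be) *\<^sub>R u1 + (b2 / be) *\<^sub>R u2 \<in> T"
          by (rule convexD[OF cT 1(4) 2(4)]) (use nn be in \<open>auto simp: be_def add_divide_distrib[symmetric]\<close>)
        have beI: "be \<in> {0..1}" using sum1 nn unfolding be_def by auto
        have "(1 - be) *\<^sub>R ((a1 / al) *\<^sub>R s1 + (a2 / al) *\<^sub>R s2) + be *\<^sub>R ((b1 / be) *\<^sub>R u1 + (b2 / be) *\<^sub>R u2)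
            = (a1 *\<^sub>R s1 + a2 *\<^sub>R s2) + (b1 *\<^sub>R u1 + b2 *\<^sub>R u2)"
        proof -
          have "1 - be = al" using sum1 unfolding al_def be_def by simp
          then show ?thesis using al be by (simp add: scaleR_add_right)
        qed
        then show ?thesis using RI[OF beI sS uT] z by simp
      qed
    qed
  qed
  have "convex hull (S \<union> T) \<subseteq> R" using hull_minimal[of "S \<union> T" R convex] sub1 cR by blast
  moreover have "R \<subseteq> convex hull (S \<union> T)"
  proof
    fix x assume "x \<in> R"
    then obtain t s u where x: "x = (1 - t) *\<^sub>R s + t *\<^sub>R u" "t \<in> {0..1}" "s \<in> S" "u \<in> T"
      unfolding R_def by blast
    have hs: "S \<union> T \<subseteq> convex hull (S \<union> T)" by (rule hull_subset)
    have "s \<in> convex hull (S \<union> T)" "u \<in> convex hull (S \<union> T)" using x(3,4) hs by blast+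
    then show "x \<in> convex hull (S \<union> T)" using x convex_convex_hull[of "S \<union> T"] unfolding convex_alt by auto
  qed
  ultimately show ?thesis unfolding R_def by blast
qed

lemma ws_compact_hull2:
  fixes A1 A2 :: "('y::real_normed_vector \<Rightarrow>\<^sub>L real) set"
  assumes "compactin weak_star_topology A1" "compactin weak_star_topology A2" "convex A1" "convex A2" "A1 \<noteq> {}" "A2 \<noteq> {}"
  shows "compactin weak_star_topology (convex hull (A1 \<union> A2))"
proof -
  define h where "h p = (1 - fst p) *\<^sub>R fst (snd p) + fst p *\<^sub>R snd (snd p)" for p :: "real \<times> ('y \<Rightarrow>\<^sub>L real) \<times> ('y \<Rightarrow>\<^sub>L real)"
  have eq: "convex hull (A1 \<union> A2) = h ` ({0..1} \<times> (A1 \<times> A2))"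
  proof -
    have "convex hull (A1 \<union> A2) = {(1 - t) *\<^sub>R s + t *\<^sub>R u | t s u. t \<in> {0..1} \<and> s \<in> A1 \<and> u \<in> A2}"
      using hull_union_two_rv[OF assms(3,4,5,6)] .
    also have "\<dots> = h ` ({0..1} \<times> (A1 \<times> A2))"
      unfolding h_def by force
    finally show ?thesis .
  qed
  have cK: "compactin (prod_topology euclideanreal (prod_topology weak_star_topology weak_star_topology)) ({0..1} \<times> (A1 \<times> A2))"
    using assms(1,2) by (simp add: compactin_Times compactin_euclidean_iff)
  have ch: "continuous_map (prod_topology euclideanreal (prod_topology weak_star_topology weak_star_topology)) weak_star_topology h"
    unfolding ws_cont_coord
  proof
    fix x :: 'y
    have c1: "continuous_map (prod_topology euclideanreal (prod_topology weak_star_topology weak_star_topology)) euclideanreal (\<lambda>p. blinfun_apply (fst (snd p)) x)"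
      using continuous_map_compose[OF continuous_map_compose[OF continuous_map_snd continuous_map_fst] ws_eval_cont[of x]]
      by (simp add: o_def)
    have c2: "continuous_map (prod_topology euclideanreal (prod_topology weak_star_topology weak_star_topology)) euclideanreal (\<lambda>p. blinfun_apply (snd (snd p)) x)"
      using continuous_map_compose[OF continuous_map_compose[OF continuous_map_snd continuous_map_snd] ws_eval_cont[of x]]
      by (simp add: o_def)
    have c0: "continuous_map (prod_topology euclideanreal (prod_topology weak_star_topology weak_star_topology)) euclideanreal fst"
      by (rule continuous_map_fst)
    have "continuous_map (prod_topology euclideanreal (prod_topology weak_star_topology weak_star_topology)) euclideanreal
        (\<lambda>p. (1 - fst p) * blinfun_apply (fst (snd p)) x + fst p * blinfun_apply (snd (snd p)) x)"
      by (intro continuous_map_add continuous_map_real_mult continuous_map_diff c0 c1 c2 continuous_map_canonical_const)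
    then show "continuous_map (prod_topology euclideanreal (prod_topology weak_star_topology weak_star_topology)) euclideanreal
        (\<lambda>p. blinfun_apply (h p) x)"
      unfolding h_def by (simp add: blinfun.add_left blinfun.scaleR_left)
  qed
  show ?thesis unfolding eq by (rule image_compactin[OF cK ch])
qed

lemma ws_compact_hull_finite:
  fixes \<H> :: "('y::real_normed_vector \<Rightarrow>\<^sub>L real) set set"
  assumes "finite \<H>" "\<And>H. H \<in> \<H> \<Longrightarrow> compactin weak_star_topology H \<and> convex H"
  shows "compactin weak_star_topology (convex hull (\<Union>\<H>))"
  using assms
proof (induction \<H> rule: finite_induct)
  case empty then show ?case by simp
next
  case (insert H \<H>)
  have IH: "compactin weak_star_topology (convex hull (\<Union>\<H>))" using insert by auto
  have H: "compactin weak_star_topology H" "convex H" using insert by auto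
  have eq: "convex hull (\<Union>(insert H \<H>)) = convex hull (H \<union> convex hull (\<Union>\<H>))"
    unfolding Union_insert by (rule hull_Un_right)
  consider "H = {}" | "\<Union>\<H> = {}" | "H \<noteq> {}" "\<Union>\<H> \<noteq> {}" by blast
  then show ?case
  proof cases
    case 1 then show ?thesis using IH by simp
  next
    case 2
    then have "\<Union>(insert H \<H>) = H" by auto
    then show ?thesis using H by (simp add: hull_same)
  next
    case 3
    have "compactin weak_star_topology (convex hull (H \<union> convex hull (\<Union>\<H>)))"
      by (rule ws_compact_hull2[OF H(1) IH H(2) convex_convex_hull]) (use 3 in auto)
    then show ?thesis by (simp only: eq)
  qed
qed

lemma convex_ge: "convex {k::'y::real_normed_vector \<Rightarrow>\<^sub>L real. c \<le> blinfun_apply k w}"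
proof (rule convexI)
  fix x y :: "'y \<Rightarrow>\<^sub>L real" and u v :: real
  assume "x \<in> {k. c \<le> blinfun_apply k w}" "y \<in> {k. c \<le> blinfun_apply k w}" "0 \<le> u" "0 \<le> v" "u + v = 1"
  then have "u * c \<le> u * blinfun_apply x w" "v * c \<le> v * blinfun_apply y w" "u * c + v * c = c"
    by (auto intro: mult_left_mono simp: distrib_right[symmetric])
  then show "u *\<^sub>R x + v *\<^sub>R y \<in> {k. c \<le> blinfun_apply k w}" by (simp add: blinfun.add_left blinfun.scaleR_left)
qed

lemma convex_le: "convex {k::'y::real_normed_vector \<Rightarrow>\<^sub>L real. blinfun_apply k w \<le> c}"
proof (rule convexI)
  fix x y :: "'y \<Rightarrow>\<^sub>L real" and u v :: real
  assume "x \<in> {k. blinfun_apply k w \<le> c}" "y \<in> {k. blinfun_apply k w \<le> c}" "0 \<le> u" "0 \<le> v" "u + v = 1"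
  then have "u * blinfun_apply x w \<le> u * c" "v * blinfun_apply y w \<le> v * c" "u * c + v * c = c"
    by (auto intro: mult_left_mono simp: distrib_right[symmetric])
  then show "u *\<^sub>R x + v *\<^sub>R y \<in> {k. blinfun_apply k w \<le> c}" by (simp add: blinfun.add_left blinfun.scaleR_left)
qed

lemma convex_dual_ball: "convex dual_ball" unfolding dual_ball_def by (rule convex_cball)

lemma choquet:
  fixes e :: "'y::real_normed_vector \<Rightarrow>\<^sub>L real"
  assumes ext: "e extreme_point_of dual_ball" and op: "openin weak_star_topology Op" and eO: "e \<in> Op"
  shows "\<exists>y c. c < blinfun_apply e y \<and> (\<forall>k\<in>dual_ball. c < blinfun_apply k y \<longrightarrow> k \<in> Op)"
proof -
  obtain W d where W: "finite W" "d > 0" and sub: "{k. \<forall>w\<in>W. \<bar>blinfun_apply k w - blinfun_apply e w\<bar> < d} \<subseteq> Op"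
    using ws_open_basic[OF op eO] by blast
  define \<H> where "\<H> = (\<lambda>w. dual_ball \<inter> {k. blinfun_apply e w + d \<le> blinfun_apply k w}) ` W
                      \<union> (\<lambda>w. dual_ball \<inter> {k. blinfun_apply k w \<le> blinfun_apply e w - d}) ` W"
  have finH: "finite \<H>" unfolding \<H>_def using W by auto
  have Hprop: "compactin weak_star_topology H \<and> convex H" if "H \<in> \<H>" for H
    using that unfolding \<H>_def
    by (auto intro!: ws_compact_sub closedin_Int closedin_dual_ball closedin_ge closedin_le convex_Int
             convex_dual_ball convex_ge convex_le)
  define C where "C = convex hull (\<Union>\<H>)"
  have cC: "compactin weak_star_topology C" unfolding C_def by (rule ws_compact_hull_finite[OF finH Hprop])
  have cvC: "convex C" unfolding C_def by simp
  have CB: "C \<subseteq> dual_ball" unfolding C_def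
    by (rule hull_minimal) (auto simp: \<H>_def convex_dual_ball)
  have eC: "e \<notin> C"
  proof
    assume "e \<in> C"
    then have "e extreme_point_of C" using ext CB unfolding extreme_point_of_def by blast
    then have "e \<in> \<Union>\<H>" unfolding C_def by (rule extreme_point_of_convex_hull)
    then show False unfolding \<H>_def using W(2) by auto
  qed
  obtain y c where yc: "c < blinfun_apply e y" "\<And>k. k \<in> C \<Longrightarrow> blinfun_apply k y \<le> c"
    using ws_separation[OF cC cvC eC] by blast
  show ?thesis
  proof (intro exI conjI ballI impI)
    show "c < blinfun_apply e y" by fact
  next
    fix k assume kB: "k \<in> dual_ball" and ck: "c < blinfun_apply k y"
    then have "k \<notin> C" using yc(2) by force
    moreover have "\<Union>\<H> \<subseteq> C" unfolding C_def by (rule hull_subset)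
    ultimately have "k \<notin> \<Union>\<H>" by blast
    have "\<bar>blinfun_apply k w - blinfun_apply e w\<bar> < d" if w: "w \<in> W" for w
    proof -
      have "\<not> (blinfun_apply e w + d \<le> blinfun_apply k w)" "\<not> (blinfun_apply k w \<le> blinfun_apply e w - d)"
        using \<open>k \<notin> \<Union>\<H>\<close> kB w unfolding \<H>_def by auto
      then show ?thesis by (simp add: abs_less_iff)
    qed
    then have "\<forall>w\<in>W. \<bar>blinfun_apply k w - blinfun_apply e w\<bar> < d" by blast
    then show "k \<in> Op" using sub by blast
  qed
qed

lemma ws_closure_convex:
  fixes S :: "('y::real_normed_vector \<Rightarrow>\<^sub>L real) set"
  assumes "convex S"
  shows "convex (weak_star_topology closure_of S)"
  unfolding convex_alt
proof (intro ballI allI impI)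
  fix x y and u :: real assume x: "x \<in> weak_star_topology closure_of S" and y: "y \<in> weak_star_topology closure_of S"
    and u: "0 \<le> u \<and> u \<le> 1"
  define h where "h p = (1 - u) *\<^sub>R fst p + u *\<^sub>R snd p" for p :: "('y \<Rightarrow>\<^sub>L real) \<times> ('y \<Rightarrow>\<^sub>L real)"
  have ch: "continuous_map (prod_topology weak_star_topology weak_star_topology) weak_star_topology h"
    unfolding ws_cont_coord
  proof
    fix w :: 'y
    have c1: "continuous_map (prod_topology weak_star_topology weak_star_topology) euclideanreal (\<lambda>p. blinfun_apply (fst p) w)"
      using continuous_map_compose[OF continuous_map_fst ws_eval_cont[of w]] by (simp add: o_def)
    have c2: "continuous_map (prod_topology weak_star_topology weak_star_topology) euclideanreal (\<lambda>p. blinfun_apply (snd p) w)"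
      using continuous_map_compose[OF continuous_map_snd ws_eval_cont[of w]] by (simp add: o_def)
    have "continuous_map (prod_topology weak_star_topology weak_star_topology) euclideanreal
        (\<lambda>p. (1 - u) * blinfun_apply (fst p) w + u * blinfun_apply (snd p) w)"
      by (intro continuous_map_add continuous_map_real_mult c1 c2 continuous_map_canonical_const)
    then show "continuous_map (prod_topology weak_star_topology weak_star_topology) euclideanreal (\<lambda>p. blinfun_apply (h p) w)"
      unfolding h_def by (simp add: blinfun.add_left blinfun.scaleR_left)
  qed
  have "(x, y) \<in> prod_topology weak_star_topology weak_star_topology closure_of (S \<times> S)"
    using x y by (simp add: closure_of_Times)
  then have "h (x, y) \<in> weak_star_topology closure_of (h ` (S \<times> S))"
    using continuous_map_image_closure_subset[OF ch] by blast
  moreover have "h ` (S \<times> S) \<subseteq> S" using assms u unfolding h_def convex_alt by auto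
  ultimately have "h (x, y) \<in> weak_star_topology closure_of S" using closure_of_mono by blast
  then show "(1 - u) *\<^sub>R x + u *\<^sub>R y \<in> weak_star_topology closure_of S" unfolding h_def by simp
qed

lemma krein_milman:
  "(dual_ball :: ('y::real_normed_vector \<Rightarrow>\<^sub>L real) set) \<subseteq>
     weak_star_topology closure_of (convex hull {e. e extreme_point_of dual_ball})"
proof
  fix k0 :: "'y \<Rightarrow>\<^sub>L real" assume k0: "k0 \<in> dual_ball"
  define C where "C = weak_star_topology closure_of (convex hull {e::'y \<Rightarrow>\<^sub>L real. e extreme_point_of dual_ball})"
  have hB: "convex hull {e::'y \<Rightarrow>\<^sub>L real. e extreme_point_of dual_ball} \<subseteq> dual_ball"
    by (rule hull_minimal) (auto simp: extreme_point_of_def convex_dual_ball)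
  have CB: "C \<subseteq> dual_ball" unfolding C_def by (rule closure_of_minimal[OF hB closedin_dual_ball])
  have cC: "compactin weak_star_topology C" unfolding C_def
    by (rule ws_compact_sub[OF closedin_closure_of]) (use CB C_def in simp)
  have cvC: "convex C" unfolding C_def by (intro ws_closure_convex convex_convex_hull)
  show "k0 \<in> C"
  proof (rule ccontr)
    assume "k0 \<notin> C"
    obtain y c where yc: "c < blinfun_apply k0 y" "\<And>k. k \<in> C \<Longrightarrow> blinfun_apply k y \<le> c"
      using ws_separation[OF cC cvC \<open>k0 \<notin> C\<close>] by blast
    obtain e where e: "e extreme_point_of (dual_ball :: ('y \<Rightarrow>\<^sub>L real) set)" "\<forall>k\<in>dual_ball. blinfun_apply k y \<le> blinfun_apply e y"
      using extreme_max by blast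
    have "e \<in> C" unfolding C_def
      using e(1) closure_of_subset[of "convex hull {e::'y \<Rightarrow>\<^sub>L real. e extreme_point_of dual_ball}" weak_star_topology]
        hull_subset by fastforce
    then show False using yc e(2) k0 by fastforce
  qed
qed

lemma sup_eq_approx:
  fixes f :: "'a \<Rightarrow> real"
  assumes ne: "A \<noteq> {}" and le: "\<And>x. x \<in> A \<Longrightarrow> f x \<le> M" and ap: "\<And>e. e > 0 \<Longrightarrow> \<exists>x\<in>A. f x > M - e"
  shows "(SUP x\<in>A. f x) = M"
proof (rule antisym)
  show "(SUP x\<in>A. f x) \<le> M" by (rule cSUP_least) (use ne le in auto)
  have bdd: "bdd_above (f ` A)" by (rule bdd_aboveI2[where M=M]) (rule le)
  show "M \<le> (SUP x\<in>A. f x)"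
  proof (rule ccontr)
    assume H: "\<not> M \<le> (SUP x\<in>A. f x)"
    then obtain x where x: "x \<in> A" "f x > M - (M - (SUP x\<in>A. f x))" using ap[of "M - (SUP x\<in>A. f x)"] by auto
    have "f x \<le> (SUP x\<in>A. f x)" by (rule cSUP_upper[OF x(1) bdd])
    then show False using x by simp
  qed
qed

lemma blo_add: "bounded_linear_on X f \<Longrightarrow> x \<in> X \<Longrightarrow> y \<in> X \<Longrightarrow> f (x + y) = f x + f y"
  unfolding bounded_linear_on_def by blast

lemma blo_scale: "bounded_linear_on X f \<Longrightarrow> x \<in> X \<Longrightarrow> f (c *\<^sub>R x) = c *\<^sub>R f x"
  unfolding bounded_linear_on_def by blast

lemma blo_zero: "bounded_linear_on X f \<Longrightarrow> subspace X \<Longrightarrow> f 0 = 0"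
  using blo_scale[of X f 0 0] subspace_0[of X] by simp

lemma blo_neg: "bounded_linear_on X f \<Longrightarrow> x \<in> X \<Longrightarrow> f (- x) = - f x"
  using blo_scale[of X f x "-1"] by simp

lemma blo_bdd:
  assumes "bounded_linear_on X f"
  shows "bdd_above ((\<lambda>x. norm (f x)) ` (X \<inter> cball 0 1))"
proof -
  obtain M where M: "\<And>x. x \<in> X \<Longrightarrow> norm (f x) \<le> M * norm x" using assms unfolding bounded_linear_on_def by blast
  have hb: "norm (f x) \<le> max M 0" if "x \<in> X \<inter> cball 0 1" for x
  proof -
    have "norm (f x) \<le> M * norm x" using M that by auto
    also have "\<dots> \<le> max M 0 * norm x" by (intro mult_right_mono) auto
    also have "\<dots> \<le> max M 0" using that by (intro mult_left_le) auto
    finally show ?thesis .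
  qed
  show ?thesis by (rule bdd_aboveI2[where M="max M 0"]) (rule hb)
qed

lemma blo_le_norm:
  assumes "bounded_linear_on X f" "x \<in> X" "norm x \<le> 1"
  shows "norm (f x) \<le> op_norm_on X f"
  unfolding op_norm_on_def by (rule cSUP_upper[OF _ blo_bdd[OF assms(1)]]) (use assms in auto)

lemma blo_norm_nonneg:
  assumes "bounded_linear_on X f" "subspace X"
  shows "0 \<le> op_norm_on X f"
  using blo_le_norm[OF assms(1) subspace_0[OF assms(2)]] by (simp add: order_trans[OF norm_ge_zero])

lemma blo_scale_bound:
  assumes f: "bounded_linear_on X f" and X: "subspace X" and x: "x \<in> X"
  shows "norm (f x) \<le> op_norm_on X f * norm x"
proof (cases "x = 0")
  case True then show ?thesis using blo_zero[OF f X] by simp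
next
  case False
  define y where "y = (1 / norm x) *\<^sub>R x"
  have yX: "y \<in> X" unfolding y_def using X x by (simp add: subspace_scale)
  have ny: "norm y = 1" unfolding y_def using False by simp
  have "norm (f y) = norm (f x) / norm x" unfolding y_def using blo_scale[OF f x] by simp
  moreover have "norm (f y) \<le> op_norm_on X f" using blo_le_norm[OF f yX] ny by simp
  ultimately show ?thesis using False by (simp add: divide_le_eq mult.commute)
qed

lemma blo_approx:
  fixes f :: "'y::real_normed_vector \<Rightarrow> real"
  assumes f: "bounded_linear_on X f" and X: "subspace X" and e: "e > 0"
  shows "\<exists>x\<in>X. norm x \<le> 1 \<and> f x > op_norm_on X f - e"
proof -
  have ne: "X \<inter> cball 0 1 \<noteq> {}" using subspace_0[OF X] by auto
  have "op_norm_on X f - e < op_norm_on X f" using e by simp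
  then obtain x where x: "x \<in> X \<inter> cball 0 1" "op_norm_on X f - e < norm (f x)"
    unfolding op_norm_on_def using less_cSUP_iff[OF ne blo_bdd[OF f]] by blast
  show ?thesis
  proof (cases "f x \<ge> 0")
    case True then show ?thesis using x by auto
  next
    case False
    have "- x \<in> X" using x X by (simp add: subspace_neg)
    moreover have "f (- x) = - f x" using blo_neg[OF f] x by auto
    ultimately show ?thesis using x False by (intro bexI[of _ "- x"]) auto
  qed
qed

lemma daugavet_apply:
  fixes f :: "'y::real_normed_vector \<Rightarrow> real"
  assumes X: "subspace X" and D: "daugavet_pair X" and f: "bounded_linear_on X f"
    and n: "op_norm_on X f > 0" and u: "norm u = 1" and b: "b > 0"
  shows "\<exists>x\<in>X. norm x \<le> 1 \<and> f x \<ge> 0 \<and> norm (x + (f x / op_norm_on X f) *\<^sub>R u) > 2 - b"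
proof -
  define n where "n = op_norm_on X f"
  define T where "T x = (f x / n) *\<^sub>R u" for x
  have fx: "\<bar>f x\<bar> \<le> n * norm x" if "x \<in> X" for x using blo_scale_bound[OF f X that] unfolding n_def by simp
  have blT: "bounded_linear_on X T"
    unfolding bounded_linear_on_def
  proof (intro conjI ballI allI)
    fix x y assume "x \<in> X" "y \<in> X"
    then show "T (x + y) = T x + T y" unfolding T_def using blo_add[OF f] by (simp add: add_divide_distrib scaleR_add_left)
  next
    fix c x assume "x \<in> X"
    then show "T (c *\<^sub>R x) = c *\<^sub>R T x" unfolding T_def using blo_scale[OF f] by simp
  next
    show "\<exists>M. \<forall>x\<in>X. norm (T x) \<le> M * norm x"
    proof (intro exI ballI)
      fix x assume "x \<in> X"
      then show "norm (T x) \<le> 1 * norm x" unfolding T_def using u fx n n_def by (simp add: divide_le_eq mult.commute)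
    qed
  qed
  obtain x0 where x0: "x0 \<in> X" "f x0 > 0" using blo_approx[OF f X n] by auto
  have img: "T ` X = span {u}"
  proof
    show "T ` X \<subseteq> span {u}" unfolding T_def by (auto simp: span_singleton)
    show "span {u} \<subseteq> T ` X"
    proof
      fix v assume "v \<in> span {u}"
      then obtain t where t: "v = t *\<^sub>R u" by (auto simp: span_singleton)
      define x where "x = (t * n / f x0) *\<^sub>R x0"
      have "x \<in> X" unfolding x_def using X x0 by (simp add: subspace_scale)
      moreover have "T x = v" unfolding T_def x_def t using blo_scale[OF f x0(1)] x0 n n_def by simp
      ultimately show "v \<in> T ` X" by blast
    qed
  qed
  have dimT: "dim (T ` X) = 1"
  proof -
    have "independent {u}" using u dependent_single[of u] by auto
    then have "dim (span {u}) = card {u}" by (rule dim_span_eq_card_independent)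
    then show ?thesis unfolding img by simp
  qed
  have nT: "op_norm_on X T = 1"
    unfolding op_norm_on_def
  proof (rule sup_eq_approx)
    show "X \<inter> cball 0 1 \<noteq> {}" using subspace_0[OF X] by auto
  next
    fix x assume "x \<in> X \<inter> cball 0 1"
    then have "\<bar>f x\<bar> \<le> n" using blo_le_norm[OF f] unfolding n_def by auto
    then show "norm (T x) \<le> 1" unfolding T_def using u n n_def by (simp add: divide_le_eq)
  next
    fix e :: real assume e: "e > 0"
    obtain x where x: "x \<in> X" "norm x \<le> 1" "f x > n - e * n" using blo_approx[OF f X, of "e * n"] e n n_def by auto
    have "norm (T x) = \<bar>f x\<bar> / n" unfolding T_def using u n n_def by simp
    also have "\<bar>f x\<bar> / n \<ge> f x / n" using n n_def by (simp add: divide_right_mono)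
    moreover have "f x / n > (n - e * n) / n" using x n n_def by (simp add: divide_strict_right_mono)
    moreover have "(n - e * n) / n = 1 - e" using n n_def by (simp add: field_simps)
    ultimately show "\<exists>x\<in>X \<inter> cball 0 1. 1 - e < norm (T x)" using x by (intro bexI[of _ x]) auto
  qed
  have "op_norm_on X (\<lambda>x. x + T x) = 1 + op_norm_on X T" using D blT dimT unfolding daugavet_pair_def by blast
  then have two: "(SUP x\<in>X \<inter> cball 0 1. norm (x + T x)) = 2" using nT unfolding op_norm_on_def by simp
  have bdd: "bdd_above ((\<lambda>x. norm (x + T x)) ` (X \<inter> cball 0 1))"
  proof (rule bdd_aboveI2)
    fix x assume x: "x \<in> X \<inter> cball 0 1"
    have "norm (x + T x) \<le> norm x + norm (T x)" by (rule norm_triangle_ineq)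
    also have "norm (T x) \<le> 1" using nT blo_le_norm[OF blT, of x] x by auto
    finally show "norm (x + T x) \<le> 2" using x by auto
  qed
  have "2 - b < (SUP x\<in>X \<inter> cball 0 1. norm (x + T x))" using two b by simp
  then obtain x where x: "x \<in> X \<inter> cball 0 1" "2 - b < norm (x + T x)"
  proof -
    have ne: "X \<inter> cball 0 1 \<noteq> {}" using subspace_0[OF X] by auto
    show ?thesis using \<open>2 - b < (SUP x\<in>X \<inter> cball 0 1. norm (x + T x))\<close>
      unfolding less_cSUP_iff[OF ne bdd] using that by blast
  qed
  show ?thesis
  proof (cases "f x \<ge> 0")
    case True then show ?thesis using x unfolding T_def n_def by auto
  next
    case False
    have mx: "- x \<in> X" using x X by (simp add: subspace_neg)
    have fm: "f (- x) = - f x" using blo_neg[OF f] x by auto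
    have "norm (- x + T (- x)) = norm (x + T x)"
      unfolding T_def fm by (metis minus_add_distrib norm_minus_cancel scaleR_minus_left minus_divide_left)
    then show ?thesis using x False mx fm unfolding T_def n_def by (intro bexI[of _ "- x"]) auto
  qed
qed

lemma slice_step:
  fixes psi :: "'y::real_normed_vector \<Rightarrow> real"
  assumes X: "subspace X" and D: "daugavet_pair X" and f: "bounded_linear_on X psi"
    and c: "c \<ge> 0" and ne: "\<exists>x\<in>X. norm x \<le> 1 \<and> psi x > c" and eta: "eta > 0"
  shows "\<exists>(psi'::'y \<Rightarrow> real) (c'::real). bounded_linear_on X psi' \<and> c' \<ge> 0 \<and> (\<exists>x\<in>X. norm x \<le> 1 \<and> psi' x > c') \<and>
          (\<forall>x\<in>X. norm x \<le> 1 \<and> psi' x > c' \<longrightarrow> psi x > c \<and> norm (x + z) > 1 + norm z - eta)"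
proof -
  define n where "n = op_norm_on X psi"
  obtain x0 where x0: "x0 \<in> X" "norm x0 \<le> 1" "psi x0 > c" using ne by blast
  have "psi x0 \<le> n" using blo_le_norm[OF f x0(1,2)] unfolding n_def by simp
  then have cn: "c < n" using x0 by simp
  have n0: "n > 0" using cn c by simp
  have fx: "\<bar>psi x\<bar> \<le> n * norm x" if "x \<in> X" for x using blo_scale_bound[OF f X that] unfolding n_def by simp
  have fle: "psi x \<le> n" if "x \<in> X" "norm x \<le> 1" for x using blo_le_norm[OF f that] unfolding n_def by simp
  show ?thesis
  proof (cases "z = 0")
    case True
    define c' where "c' = max c (n * (1 - eta))"
    have c'n: "c' < n" unfolding c'_def using cn n0 eta by (auto simp: algebra_simps)
    obtain x1 where x1: "x1 \<in> X" "norm x1 \<le> 1" "psi x1 > n - (n - c')"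
      using blo_approx[OF f X, of "n - c'"] c'n unfolding n_def by auto
    show ?thesis
    proof (intro exI[of _ psi] exI[of _ c'] conjI ballI impI)
      show "bounded_linear_on X psi" by fact
      show "c' \<ge> 0" unfolding c'_def using c by simp
      show "\<exists>x\<in>X. norm x \<le> 1 \<and> psi x > c'" using x1 by auto
    next
      fix x assume x: "x \<in> X" "norm x \<le> 1 \<and> psi x > c'"
      show "psi x > c" using x unfolding c'_def by simp
      have "n * (1 - eta) < n * norm x" using x fx[OF x(1)] unfolding c'_def by auto
      then have "1 - eta < norm x" using n0 by simp
      then show "norm (x + z) > 1 + norm z - eta" using True by simp
    qed
  next
    case False
    define u where "u = (1 / norm z) *\<^sub>R z"
    have u: "norm u = 1" unfolding u_def using False by simp
    have zu: "z = norm z *\<^sub>R u" unfolding u_def using False by simp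
    define b where "b = min (1/2) (min ((n - c) / n) (eta / (1 + norm z)))"
    have "(n - c) / n > 0" using cn n0 by simp
    moreover have "eta / (1 + norm z) > 0" using eta by (simp add: add_pos_nonneg)
    ultimately have b0: "b > 0" unfolding b_def by simp
    have b1: "b \<le> 1/2" unfolding b_def by (rule min.cobounded1)
    have b2: "b \<le> (n - c) / n" unfolding b_def by (rule order_trans[OF min.cobounded2 min.cobounded1])
    have b3: "b \<le> eta / (1 + norm z)" unfolding b_def by (rule order_trans[OF min.cobounded2 min.cobounded2])
    obtain x1 where x1: "x1 \<in> X" "norm x1 \<le> 1" "psi x1 \<ge> 0" "norm (x1 + (psi x1 / n) *\<^sub>R u) > 2 - b"
      using daugavet_apply[OF X D f _ u b0] n0 unfolding n_def by auto
    obtain k :: "'y \<Rightarrow>\<^sub>L real" where k: "norm k \<le> 1" "blinfun_apply k (x1 + (psi x1 / n) *\<^sub>R u) = norm (x1 + (psi x1 / n) *\<^sub>R u)"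
      using hb_norming by blast
    have kb: "\<bar>blinfun_apply k v\<bar> \<le> norm v" for v
      using k(1) dual_ball_apply[of k v] unfolding dual_ball_def by simp
    define psi' where "psi' x = blinfun_apply k x + blinfun_apply k u * (psi x / n)" for x
    have psi'x1: "psi' x1 > 2 - b"
      using k(2) x1(4) unfolding psi'_def by (simp add: blinfun.add_right blinfun.scaleR_right mult.commute)
    have blp: "bounded_linear_on X psi'"
      unfolding bounded_linear_on_def
    proof (intro conjI ballI allI)
      fix x y assume "x \<in> X" "y \<in> X"
      then show "psi' (x + y) = psi' x + psi' y" unfolding psi'_def using blo_add[OF f]
        by (simp add: blinfun.add_right add_divide_distrib algebra_simps)
    next
      fix r x assume "x \<in> X"
      then show "psi' (r *\<^sub>R x) = r *\<^sub>R psi' x" unfolding psi'_def using blo_scale[OF f]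
        by (simp add: blinfun.scaleR_right algebra_simps)
    next
      show "\<exists>M. \<forall>x\<in>X. norm (psi' x) \<le> M * norm x"
      proof (intro exI ballI)
        fix x assume xX: "x \<in> X"
        have "\<bar>psi' x\<bar> \<le> \<bar>blinfun_apply k x\<bar> + \<bar>blinfun_apply k u\<bar> * \<bar>psi x / n\<bar>"
          unfolding psi'_def by (metis abs_mult abs_triangle_ineq)
        also have "\<dots> \<le> norm x + 1 * norm x"
        proof (intro add_mono mult_mono)
          show "\<bar>blinfun_apply k x\<bar> \<le> norm x" by (rule kb)
          show "\<bar>blinfun_apply k u\<bar> \<le> 1" using kb[of u] u by simp
          show "\<bar>psi x / n\<bar> \<le> norm x" using fx[OF xX] n0 by (simp add: divide_le_eq mult.commute)
        qed auto
        finally show "norm (psi' x) \<le> 2 * norm x" by simp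
      qed
    qed
    have ku_pos: "blinfun_apply k u > 0"
    proof -
      have "blinfun_apply k x1 \<le> 1" using kb[of x1] x1(2) abs_ge_self[of "blinfun_apply k x1"] by linarith
      then have "blinfun_apply k u * (psi x1 / n) > 1 - b" using psi'x1 unfolding psi'_def by simp
      then have "blinfun_apply k u * (psi x1 / n) > 0" using b1 by simp
      moreover have "psi x1 / n \<ge> 0" using x1(3) n0 by simp
      ultimately show ?thesis using zero_less_mult_iff[of "blinfun_apply k u" "psi x1 / n"] by linarith
    qed
    show ?thesis
    proof (intro exI[of _ psi'] exI[of _ "2 - b"] conjI ballI impI)
      show "bounded_linear_on X psi'" by fact
      show "2 - b \<ge> 0" using b1 by simp
      show "\<exists>x\<in>X. norm x \<le> 1 \<and> psi' x > 2 - b" using x1 psi'x1 by auto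
    next
      fix x assume x: "x \<in> X" "norm x \<le> 1 \<and> psi' x > 2 - b"
      have kx: "blinfun_apply k x \<le> 1" using kb[of x] x abs_ge_self[of "blinfun_apply k x"] by linarith
      have ku1: "blinfun_apply k u \<le> 1" using kb[of u] u abs_ge_self[of "blinfun_apply k u"] by linarith
      have fn1: "psi x / n \<le> 1" using fle[of x] x n0 by simp
      have prod: "blinfun_apply k u * (psi x / n) > 1 - b" using x kx unfolding psi'_def by simp
      have fpos: "psi x / n > 0"
      proof -
        have "blinfun_apply k u * (psi x / n) > 0" using prod b1 by simp
        then show ?thesis using ku_pos zero_less_mult_iff[of "blinfun_apply k u" "psi x / n"] by linarith
      qed
      have "blinfun_apply k u * (psi x / n) \<le> 1 * (psi x / n)" using ku1 fpos by (intro mult_right_mono) auto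
      then have fb: "psi x / n > 1 - b" using prod by simp
      have "blinfun_apply k u * (psi x / n) \<le> blinfun_apply k u * 1" using fn1 ku_pos by (intro mult_left_mono) auto
      then have kub: "blinfun_apply k u > 1 - b" using prod by simp
      have kxb: "blinfun_apply k x > 1 - b"
      proof -
        have "blinfun_apply k u * (psi x / n) \<le> 1" using ku1 fn1 ku_pos fpos
          by (metis mult_le_one less_imp_le)
        then show ?thesis using x unfolding psi'_def by simp
      qed
      have "n * (1 - b) < n * (psi x / n)" using fb n0 by (intro mult_strict_left_mono) auto
      then have "psi x > n * (1 - b)" using n0 by simp
      moreover have "n * (1 - b) \<ge> c"
      proof -
        have "n * b \<le> n * ((n - c) / n)" using b2 n0 by (intro mult_left_mono) auto
        then have "n * b \<le> n - c" using n0 by simp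
        then show ?thesis by (simp add: algebra_simps)
      qed
      ultimately show "psi x > c" by simp
      have "norm (x + z) \<ge> blinfun_apply k (x + z)" using kb[of "x + z"] abs_ge_self[of "blinfun_apply k (x + z)"] by linarith
      also have "blinfun_apply k (x + z) = blinfun_apply k x + norm z * blinfun_apply k u"
        by (subst zu) (simp add: blinfun.add_right blinfun.scaleR_right)
      finally have "norm (x + z) \<ge> blinfun_apply k x + norm z * blinfun_apply k u" .
      moreover have "norm z * blinfun_apply k u \<ge> norm z * (1 - b)" using kub by (intro mult_left_mono) auto
      moreover have "(1 + norm z) * b \<le> eta"
        using b3 by (simp add: le_divide_eq mult.commute add_pos_nonneg)
      ultimately show "norm (x + z) > 1 + norm z - eta" using kxb by (simp add: algebra_simps)
    qed
  qed
qed

lemma multi_slice: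
  fixes psi :: "'y::real_normed_vector \<Rightarrow> real"
  assumes X: "subspace X" and D: "daugavet_pair X" and Z: "finite Z" and eta: "eta > 0"
  shows "bounded_linear_on X psi \<Longrightarrow> c \<ge> 0 \<Longrightarrow> (\<exists>x\<in>X. norm x \<le> 1 \<and> psi x > c) \<Longrightarrow>
    \<exists>(psi'::'y \<Rightarrow> real) (c'::real). bounded_linear_on X psi' \<and> c' \<ge> 0 \<and> (\<exists>x\<in>X. norm x \<le> 1 \<and> psi' x > c') \<and>
          (\<forall>x\<in>X. norm x \<le> 1 \<and> psi' x > c' \<longrightarrow> psi x > c \<and> (\<forall>z\<in>Z. norm (x + z) > 1 + norm z - eta))"
  using Z
proof (induction Z arbitrary: psi c rule: finite_induct)
  case empty
  then show ?case by (intro exI[of _ psi] exI[of _ c]) auto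
next
  case (insert z Z)
  obtain psi1 :: "'y \<Rightarrow> real" and c1 :: real where 1: "bounded_linear_on X psi1" "c1 \<ge> 0" "\<exists>x\<in>X. norm x \<le> 1 \<and> psi1 x > c1"
    "\<forall>x\<in>X. norm x \<le> 1 \<and> psi1 x > c1 \<longrightarrow> psi x > c \<and> norm (x + z) > 1 + norm z - eta"
    using slice_step[OF X D insert.prems eta, of z] by blast
  obtain psi2 :: "'y \<Rightarrow> real" and c2 :: real where 2: "bounded_linear_on X psi2" "c2 \<ge> 0" "\<exists>x\<in>X. norm x \<le> 1 \<and> psi2 x > c2"
    "\<forall>x\<in>X. norm x \<le> 1 \<and> psi2 x > c2 \<longrightarrow> psi1 x > c1 \<and> (\<forall>z\<in>Z. norm (x + z) > 1 + norm z - eta)"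
    using insert.IH[OF 1(1,2,3)] by blast
  show ?case
    by (intro exI[of _ psi2] exI[of _ c2] conjI 2(1,2,3)) (use 1(4) 2(4) in blast)
qed

lemma daugavet_points:
  fixes psi :: "'y::real_normed_vector \<Rightarrow> real"
  assumes X: "subspace X" and D: "daugavet_pair X" and Z: "finite Z" and eta: "eta > 0"
    and f: "bounded_linear_on X psi" and n: "op_norm_on X psi > 0"
  shows "\<exists>x\<in>X. norm x \<le> 1 \<and> psi x > op_norm_on X psi - eta \<and> (\<forall>z\<in>Z. norm (x + z) > 1 + norm z - eta)"
proof -
  define c where "c = max 0 (op_norm_on X psi - eta)"
  have cn: "c < op_norm_on X psi" unfolding c_def using n eta by auto
  have ne: "\<exists>x\<in>X. norm x \<le> 1 \<and> psi x > c"
    using blo_approx[OF f X, of "op_norm_on X psi - c"] cn by auto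
  obtain psi' :: "'y \<Rightarrow> real" and c' :: real where P: "bounded_linear_on X psi'" "c' \<ge> 0" "\<exists>x\<in>X. norm x \<le> 1 \<and> psi' x > c'"
    "\<forall>x\<in>X. norm x \<le> 1 \<and> psi' x > c' \<longrightarrow> psi x > c \<and> (\<forall>z\<in>Z. norm (x + z) > 1 + norm z - eta)"
    using multi_slice[OF X D Z eta f _ ne] unfolding c_def by auto
  obtain x where "x \<in> X" "norm x \<le> 1" "psi' x > c'" using P(3) by blast
  then show ?thesis using P(4) unfolding c_def by force
qed

lemma key_lemma:
  fixes X :: "'y::real_normed_vector set" and K :: "('y \<Rightarrow>\<^sub>L real) set" and psi :: "'y \<Rightarrow> real"
  assumes X: "subspace X" and D: "daugavet_pair X" and KK: "K = dual_ball \<or> K = ext_closure_dual_ball"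
    and f: "bounded_linear_on X psi" and n: "op_norm_on X psi > 0"
    and Op: "openin weak_star_topology Op" and k0: "k0 \<in> Op" "k0 \<in> K" and eta: "eta > 0"
  shows "\<exists>x\<in>X. norm x \<le> 1 \<and> psi x > op_norm_on X psi - eta \<and> (\<exists>k\<in>Op \<inter> K. blinfun_apply k x > 1 - eta)"
  using KK
proof
  assume KE: "K = ext_closure_dual_ball"
  have "k0 \<in> weak_star_topology closure_of {e. e extreme_point_of dual_ball}"
    using k0(2) KE unfolding ext_closure_dual_ball_def by simp
  then obtain e where e: "e extreme_point_of dual_ball" "e \<in> Op"
    using Op k0(1) unfolding in_closure_of by blast
  obtain y c where yc: "c < blinfun_apply e y" "\<And>k. k \<in> dual_ball \<Longrightarrow> c < blinfun_apply k y \<Longrightarrow> k \<in> Op"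
    using choquet[OF e(1) Op e(2)] by blast
  define g where "g = blinfun_apply e y - c"
  have g: "g > 0" using yc unfolding g_def by simp
  define et where "et = min eta g"
  have et: "et > 0" "et \<le> eta" "et \<le> g" using g eta unfolding et_def by auto
  obtain x where x: "x \<in> X" "norm x \<le> 1" "psi x > op_norm_on X psi - et" "norm (x + y) > 1 + norm y - et"
    using daugavet_points[OF X D _ et(1) f n, of "{y}"] by auto
  obtain e' where e': "e' extreme_point_of (dual_ball :: ('y \<Rightarrow>\<^sub>L real) set)" "blinfun_apply e' (x + y) = norm (x + y)"
    using extreme_norming by blast
  have e'B: "e' \<in> dual_ball" using e'(1) unfolding extreme_point_of_def by simp
  have eB: "e \<in> dual_ball" using e(1) unfolding extreme_point_of_def by simp
  have a1: "blinfun_apply e' y \<le> norm y" using dual_ball_apply[OF e'B, of y] by simp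
  have a2: "blinfun_apply e' x \<le> 1" using dual_ball_apply[OF e'B, of x] x(2) by simp
  have a3: "blinfun_apply e y \<le> norm y" using dual_ball_apply[OF eB, of y] by simp
  have sum: "blinfun_apply e' x + blinfun_apply e' y = norm (x + y)" using e'(2) by (simp add: blinfun.add_right)
  have "blinfun_apply e' x > 1 - eta" using sum a1 x(4) et by linarith
  moreover have "blinfun_apply e' y > c" using sum a2 a3 x(4) et unfolding g_def by linarith
  then have "e' \<in> Op" using yc(2)[OF e'B] by simp
  moreover have "e' \<in> K"
  proof -
    have "{e. e extreme_point_of (dual_ball :: ('y \<Rightarrow>\<^sub>L real) set)} \<subseteq> weak_star_topology closure_of {e. e extreme_point_of dual_ball}"
      by (rule closure_of_subset) simp
    then show ?thesis using e'(1) KE unfolding ext_closure_dual_ball_def by blast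
  qed
  ultimately show ?thesis using x et by (intro bexI[of _ x]) auto
next
  assume KB: "K = dual_ball"
  have "k0 \<in> weak_star_topology closure_of (convex hull {e. e extreme_point_of dual_ball})"
    using k0(2) KB krein_milman by blast
  then obtain m where m: "m \<in> convex hull {e. e extreme_point_of dual_ball}" "m \<in> Op"
    using Op k0(1) unfolding in_closure_of by blast
  obtain W d where W: "finite W" "d > 0" and Wsub: "{k. \<forall>w\<in>W. \<bar>blinfun_apply k w - blinfun_apply m w\<bar> < d} \<subseteq> Op"
    using ws_open_basic[OF Op m(2)] by blast
  obtain S u where S: "finite S" "S \<subseteq> {e. e extreme_point_of dual_ball}" "\<forall>v\<in>S. 0 \<le> u v" "sum u S = 1"
    "(\<Sum>v\<in>S. u v *\<^sub>R v) = m"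
    using m(1) unfolding convex_hull_explicit by blast
  have Sne: "S \<noteq> {}" using S(4) by auto
  have "\<forall>v\<in>S. \<exists>y c. c < blinfun_apply v y \<and>
      (\<forall>k\<in>dual_ball. c < blinfun_apply k y \<longrightarrow> k \<in> {k. \<forall>w\<in>W. \<bar>blinfun_apply k w - blinfun_apply v w\<bar> < d/2})"
  proof
    fix v assume "v \<in> S"
    then have ve: "v extreme_point_of dual_ball" using S(2) by auto
    show "\<exists>y c. c < blinfun_apply v y \<and>
      (\<forall>k\<in>dual_ball. c < blinfun_apply k y \<longrightarrow> k \<in> {k. \<forall>w\<in>W. \<bar>blinfun_apply k w - blinfun_apply v w\<bar> < d/2})"
      by (rule choquet[OF ve ws_basic_open[OF W(1)]]) (use W(2) in simp)
  qed
  then obtain Y C where YC: "\<And>v. v \<in> S \<Longrightarrow> C v < blinfun_apply v (Y v)"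
    "\<And>v k. v \<in> S \<Longrightarrow> k \<in> dual_ball \<Longrightarrow> C v < blinfun_apply k (Y v) \<Longrightarrow> \<forall>w\<in>W. \<bar>blinfun_apply k w - blinfun_apply v w\<bar> < d/2"
    by (metis (mono_tags, lifting) mem_Collect_eq)
  define g where "g = Min ((\<lambda>v. blinfun_apply v (Y v) - C v) ` S)"
  have g: "g > 0" unfolding g_def using S(1) Sne YC(1) by (subst Min_gr_iff) auto
  have gle: "g \<le> blinfun_apply v (Y v) - C v" if "v \<in> S" for v unfolding g_def using S(1) that by (intro Min_le) auto
  define et where "et = min (eta / 2) g"
  have et: "et > 0" "et \<le> eta / 2" "et \<le> g" using g eta unfolding et_def by auto
  obtain x where x: "x \<in> X" "norm x \<le> 1" "psi x > op_norm_on X psi - et" "\<forall>z\<in>Y ` S. norm (x + z) > 1 + norm z - et"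
    using daugavet_points[OF X D _ et(1) f n, of "Y ` S"] S(1) by auto
  have "\<forall>v\<in>S. \<exists>k::'y \<Rightarrow>\<^sub>L real. norm k \<le> 1 \<and> blinfun_apply k (x + Y v) = norm (x + Y v)"
    using hb_norming by blast
  then obtain Kf where Kf: "\<And>v. v \<in> S \<Longrightarrow> norm (Kf v) \<le> 1" "\<And>v. v \<in> S \<Longrightarrow> blinfun_apply (Kf v) (x + Y v) = norm (x + Y v)"
    by metis
  have KfB: "Kf v \<in> dual_ball" if "v \<in> S" for v using Kf(1)[OF that] unfolding dual_ball_def by simp
  have Kfx: "blinfun_apply (Kf v) x > 1 - et" and Kfw: "\<forall>w\<in>W. \<bar>blinfun_apply (Kf v) w - blinfun_apply v w\<bar> < d/2"
    if v: "v \<in> S" for v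
  proof -
    have vB: "v \<in> dual_ball" using S(2) v unfolding extreme_point_of_def by auto
    have a1: "blinfun_apply (Kf v) (Y v) \<le> norm (Y v)" using dual_ball_apply[OF KfB[OF v], of "Y v"] by simp
    have a2: "blinfun_apply (Kf v) x \<le> 1" using dual_ball_apply[OF KfB[OF v], of x] x(2) by simp
    have a3: "blinfun_apply v (Y v) \<le> norm (Y v)" using dual_ball_apply[OF vB, of "Y v"] by simp
    have sum: "blinfun_apply (Kf v) x + blinfun_apply (Kf v) (Y v) = norm (x + Y v)"
      using Kf(2)[OF v] by (simp add: blinfun.add_right)
    have big: "norm (x + Y v) > 1 + norm (Y v) - et" using x(4) v by auto
    show "blinfun_apply (Kf v) x > 1 - et" using sum a1 big by linarith
    have "blinfun_apply (Kf v) (Y v) > C v" using sum a2 a3 big et gle[OF v] by linarith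
    then show "\<forall>w\<in>W. \<bar>blinfun_apply (Kf v) w - blinfun_apply v w\<bar> < d/2" using YC(2)[OF v KfB[OF v]] by blast
  qed
  define k where "k = (\<Sum>v\<in>S. u v *\<^sub>R Kf v)"
  have kapp: "blinfun_apply k z = (\<Sum>v\<in>S. u v * blinfun_apply (Kf v) z)" for z
    unfolding k_def by (simp add: blinfun.sum_left blinfun.scaleR_left)
  have mapp: "blinfun_apply m z = (\<Sum>v\<in>S. u v * blinfun_apply v z)" for z
    unfolding S(5)[symmetric] by (simp add: blinfun.sum_left blinfun.scaleR_left)
  have kB: "k \<in> dual_ball"
  proof -
    have "norm k \<le> (\<Sum>v\<in>S. norm (u v *\<^sub>R Kf v))" unfolding k_def by (rule norm_sum)
    also have "\<dots> \<le> (\<Sum>v\<in>S. u v * 1)"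
    proof (rule sum_mono)
      fix v assume v: "v \<in> S"
      have "u v * norm (Kf v) \<le> u v" using mult_left_le[OF Kf(1)[OF v]] S(3) v by simp
      then show "norm (u v *\<^sub>R Kf v) \<le> u v * 1" using S(3) v by simp
    qed
    also have "\<dots> = 1" using S(4) by simp
    finally show ?thesis unfolding dual_ball_def by simp
  qed
  have kOp: "k \<in> Op"
  proof -
    have "\<bar>blinfun_apply k w - blinfun_apply m w\<bar> < d" if w: "w \<in> W" for w
    proof -
      have "blinfun_apply k w - blinfun_apply m w = (\<Sum>v\<in>S. u v * (blinfun_apply (Kf v) w - blinfun_apply v w))"
        unfolding kapp mapp by (simp add: sum_subtractf[symmetric] algebra_simps)
      also have "\<bar>\<dots>\<bar> \<le> (\<Sum>v\<in>S. \<bar>u v * (blinfun_apply (Kf v) w - blinfun_apply v w)\<bar>)" by (rule sum_abs)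
      also have "\<dots> \<le> (\<Sum>v\<in>S. u v * (d/2))"
      proof (rule sum_mono)
        fix v assume v: "v \<in> S"
        have "\<bar>u v * (blinfun_apply (Kf v) w - blinfun_apply v w)\<bar> = u v * \<bar>blinfun_apply (Kf v) w - blinfun_apply v w\<bar>"
          using S(3) v by (simp add: abs_mult)
        also have "\<dots> \<le> u v * (d/2)" using Kfw[OF v] w S(3) v by (intro mult_left_mono) auto
        finally show "\<bar>u v * (blinfun_apply (Kf v) w - blinfun_apply v w)\<bar> \<le> u v * (d/2)" .
      qed
      also have "\<dots> = d/2" unfolding sum_distrib_right[symmetric] S(4) by simp
      finally show ?thesis using W(2) by simp
    qed
    then show ?thesis using Wsub by blast
  qed
  have kx: "blinfun_apply k x > 1 - eta"
  proof -
    have "(\<Sum>v\<in>S. u v * (1 - et)) \<le> (\<Sum>v\<in>S. u v * blinfun_apply (Kf v) x)"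
      by (rule sum_mono) (use S(3) Kfx in \<open>auto intro: mult_left_mono less_imp_le\<close>)
    moreover have "(\<Sum>v\<in>S. u v * (1 - et)) = 1 - et" unfolding sum_distrib_right[symmetric] S(4) by simp
    ultimately have "blinfun_apply k x \<ge> 1 - et" unfolding kapp by simp
    then show ?thesis using et eta by linarith
  qed
  show ?thesis using x kB kOp kx KB et by (intro bexI[of _ x]) auto
qed

theorem mainTheorem6:
  fixes X :: "'y::banach set" and K :: "('y \<Rightarrow>\<^sub>L real) set"
  assumes "closed X" and "subspace X"
    and "daugavet_pair X"
    and "K = dual_ball \<or> K = ext_closure_dual_ball"
  shows "daugavet_pair_CK X K"
proof -
  have X: "subspace X" and D: "daugavet_pair X" and KK: "K = dual_ball \<or> K = ext_closure_dual_ball"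
    using assms by auto
  have Kc: "compactin weak_star_topology K" using KK compact_dual_ball compact_ext_closure by auto
  have KB: "K \<subseteq> dual_ball" using KK ext_closure_sub by auto
  define A where "A = X \<inter> cball (0::'y) 1"
  have Ane: "A \<noteq> {}" unfolding A_def using subspace_0[OF X] by auto
  show ?thesis unfolding daugavet_pair_CK_def
  proof (intro allI impI)
    fix T assume HT: "bounded_linear_into_CK X K T \<and> rank_one_into_CK X K T"
    have Tadd: "\<And>x y k. x \<in> X \<Longrightarrow> y \<in> X \<Longrightarrow> k \<in> K \<Longrightarrow> T (x + y) k = T x k + T y k"
      using HT unfolding bounded_linear_into_CK_def by blast
    have Tsc: "\<And>c x k. x \<in> X \<Longrightarrow> k \<in> K \<Longrightarrow> T (c *\<^sub>R x) k = c * T x k"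
      using HT unfolding bounded_linear_into_CK_def by blast
    obtain M where M: "\<And>x. x \<in> X \<Longrightarrow> CK_norm K (T x) \<le> M * norm x"
      using HT unfolding bounded_linear_into_CK_def by blast
    obtain x1 k1 where x1: "x1 \<in> X" "k1 \<in> K" "T x1 k1 \<noteq> 0"
      using HT unfolding rank_one_into_CK_def by blast
    obtain g where gCK: "g \<in> CK K" and grep: "\<And>x. x \<in> X \<Longrightarrow> \<exists>c. \<forall>k\<in>K. T x k = c * g k"
      using HT unfolding rank_one_into_CK_def by blast
    have gc: "continuous_map (subtopology weak_star_topology K) euclideanreal g" using gCK unfolding CK_def by simp
    have Kc': "compactin (subtopology weak_star_topology K) K" using Kc by (simp add: compactin_subtopology)
    have "compactin euclideanreal ((\<lambda>k. \<bar>g k\<bar>) ` K)"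
      by (rule image_compactin[OF Kc']) (intro continuous_map_real_abs gc)
    then have "compact ((\<lambda>k. \<bar>g k\<bar>) ` K)" by (simp add: compactin_euclidean_iff)
    then obtain k0 where k0: "k0 \<in> K" "\<And>k. k \<in> K \<Longrightarrow> \<bar>g k\<bar> \<le> \<bar>g k0\<bar>"
      using compact_attains_sup[of "(\<lambda>k. \<bar>g k\<bar>) ` K"] x1(2) by auto
    define N where "N = \<bar>g k0\<bar>"
    have gk1: "g k1 \<noteq> 0" using grep[OF x1(1)] x1 by auto
    have N: "N > 0" using k0(2)[OF x1(2)] gk1 unfolding N_def by linarith
    have gk0: "g k0 \<noteq> 0" using N unfolding N_def by simp
    define phi where "phi x = T x k0 / g k0" for x
    have Trep: "T x k = phi x * g k" if xk: "x \<in> X" "k \<in> K" for x k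
    proof -
      obtain c where c: "\<forall>k\<in>K. T x k = c * g k" using grep[OF xk(1)] by blast
      have "phi x = c" unfolding phi_def using c k0(1) gk0 by simp
      then show ?thesis using c xk(2) by simp
    qed
    have CKT: "CK_norm K (T x) = \<bar>phi x\<bar> * N" if xX: "x \<in> X" for x
      unfolding CK_norm_def
    proof (rule sup_eq_approx)
      show "K \<noteq> {}" using k0 by auto
    next
      fix k assume "k \<in> K"
      then show "\<bar>T x k\<bar> \<le> \<bar>phi x\<bar> * N" using Trep[OF xX] k0(2) unfolding N_def
        by (simp add: abs_mult mult_left_mono)
    next
      fix e :: real assume "e > 0"
      then show "\<exists>k\<in>K. \<bar>phi x\<bar> * N - e < \<bar>T x k\<bar>"
        using Trep[OF xX k0(1)] k0(1) unfolding N_def by (intro bexI[of _ k0]) (auto simp: abs_mult)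
    qed
    have blphi: "bounded_linear_on X phi"
      unfolding bounded_linear_on_def
    proof (intro conjI ballI allI)
      fix x y assume "x \<in> X" "y \<in> X"
      then show "phi (x + y) = phi x + phi y" unfolding phi_def using Tadd k0(1) by (simp add: add_divide_distrib)
    next
      fix c x assume "x \<in> X"
      then show "phi (c *\<^sub>R x) = c *\<^sub>R phi x" unfolding phi_def using Tsc k0(1) by simp
    next
      show "\<exists>M. \<forall>x\<in>X. norm (phi x) \<le> M * norm x"
      proof (intro exI ballI)
        fix x assume xX: "x \<in> X"
        have "\<bar>phi x\<bar> * N \<le> M * norm x" using M[OF xX] CKT[OF xX] by simp
        then show "norm (phi x) \<le> (M / N) * norm x" using N by (simp add: field_simps)
      qed
    qed
    define nphi where "nphi = op_norm_on X phi"
    have nphi: "nphi > 0"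
    proof -
      have "\<bar>phi x1\<bar> \<le> nphi * norm x1" using blo_scale_bound[OF blphi X x1(1)] unfolding nphi_def by simp
      moreover have "phi x1 \<noteq> 0" using Trep[OF x1(1,2)] x1(3) by auto
      moreover have "nphi \<ge> 0" unfolding nphi_def by (rule blo_norm_nonneg[OF blphi X])
      ultimately show ?thesis
      proof -
        assume a: "\<bar>phi x1\<bar> \<le> nphi * norm x1" "phi x1 \<noteq> 0" "nphi \<ge> 0"
        have "0 < nphi * norm x1" using a(1,2) zero_less_abs_iff[of "phi x1"] by linarith
        then show ?thesis using a(3) by (cases "nphi = 0") auto
      qed
    qed
    have normT: "op_norm_into_CK X K T = nphi * N"
      unfolding op_norm_into_CK_def
    proof (rule sup_eq_approx)
      show "X \<inter> cball 0 1 \<noteq> {}" using Ane unfolding A_def .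
    next
      fix x assume x: "x \<in> X \<inter> cball 0 1"
      have "\<bar>phi x\<bar> \<le> nphi" using blo_le_norm[OF blphi, of x] x unfolding nphi_def by auto
      then show "CK_norm K (T x) \<le> nphi * N" using CKT x N by (simp add: mult_right_mono)
    next
      fix e :: real assume e: "e > 0"
      obtain x where x: "x \<in> X" "norm x \<le> 1" "phi x > nphi - e / N"
        using blo_approx[OF blphi X, of "e / N"] e N unfolding nphi_def by auto
      have "(nphi - e / N) * N < phi x * N" using x N by (intro mult_strict_right_mono) auto
      also have "\<dots> \<le> \<bar>phi x\<bar> * N" using N by (intro mult_right_mono) auto
      finally have "nphi * N - e < \<bar>phi x\<bar> * N" using N by (simp add: algebra_simps)
      then show "\<exists>x\<in>X \<inter> cball 0 1. nphi * N - e < CK_norm K (T x)" using x CKT by (intro bexI[of _ x]) auto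
    qed
    define inner where "inner x = CK_norm K (\<lambda>k. blinfun_apply k x + T x k)" for x
    define Mx where "Mx = 1 + nphi * N"
    have ub: "\<bar>blinfun_apply k x + T x k\<bar> \<le> Mx" if x: "x \<in> A" and k: "k \<in> K" for x k
    proof -
      have xX: "x \<in> X" and xn: "norm x \<le> 1" using x unfolding A_def by auto
      have "\<bar>blinfun_apply k x + T x k\<bar> \<le> \<bar>blinfun_apply k x\<bar> + \<bar>phi x\<bar> * \<bar>g k\<bar>"
        using Trep[OF xX k] abs_triangle_ineq[of "blinfun_apply k x" "phi x * g k"] by (simp add: abs_mult)
      also have "\<dots> \<le> 1 + nphi * N"
      proof (intro add_mono mult_mono)
        show "\<bar>blinfun_apply k x\<bar> \<le> 1" using dual_ball_apply[of k x] KB k xn by auto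
        show "\<bar>phi x\<bar> \<le> nphi" using blo_le_norm[OF blphi xX xn] unfolding nphi_def by simp
        show "\<bar>g k\<bar> \<le> N" using k0(2)[OF k] unfolding N_def .
      qed (use nphi in auto)
      finally show ?thesis unfolding Mx_def .
    qed
    have inner_le: "inner x \<le> Mx" if "x \<in> A" for x
      unfolding inner_def CK_norm_def by (rule cSUP_least) (use k0(1) ub[OF that] in auto)
    have inner_ge: "\<bar>blinfun_apply k x + T x k\<bar> \<le> inner x" if "x \<in> A" "k \<in> K" for x k
      unfolding inner_def CK_norm_def
      by (rule cSUP_upper[OF that(2)]) (rule bdd_aboveI2[where M=Mx], rule ub[OF that(1)])
    have approx: "\<exists>x\<in>A. inner x > Mx - e" if e: "e > 0" for e
    proof -
      define s :: real where "s = (if g k0 \<ge> 0 then 1 else -1)"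
      have s: "s * g k0 = N" "s * s = 1" "\<bar>s\<bar> = 1" unfolding s_def N_def by auto
      define psi where "psi x = s * phi x" for x
      have blpsi: "bounded_linear_on X psi"
        unfolding bounded_linear_on_def
      proof (intro conjI ballI allI)
        fix x y assume "x \<in> X" "y \<in> X"
        then show "psi (x + y) = psi x + psi y" unfolding psi_def using blo_add[OF blphi] by (simp add: algebra_simps)
      next
        fix c x assume "x \<in> X"
        then show "psi (c *\<^sub>R x) = c *\<^sub>R psi x" unfolding psi_def using blo_scale[OF blphi] by simp
      next
        obtain M' where M': "\<And>x. x \<in> X \<Longrightarrow> norm (phi x) \<le> M' * norm x" using blphi unfolding bounded_linear_on_def by blast
        show "\<exists>M. \<forall>x\<in>X. norm (psi x) \<le> M * norm x"
          using M' s(3) unfolding psi_def by (intro exI[of _ M']) (auto simp: abs_mult)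
      qed
      have npsi: "op_norm_on X psi = nphi"
        unfolding nphi_def op_norm_on_def psi_def using s(3) by (simp add: abs_mult)
      define ep where "ep = min (min nphi N) (e / (2 * (1 + nphi + N)))"
      have den: "2 * (1 + nphi + N) > 0" using nphi N by simp
      have ep: "ep > 0" "ep \<le> nphi" "ep \<le> N" "ep \<le> e / (2 * (1 + nphi + N))"
        unfolding ep_def using nphi N e den by (auto simp: min_def)
      have ep2: "ep * (1 + nphi + N) \<le> e / 2"
        using ep(4) den by (simp add: le_divide_eq algebra_simps)
      define U where "U = {k \<in> topspace (subtopology weak_star_topology K). (\<lambda>k. s * g k) k \<in> {N - ep<..}}"
      have "openin (subtopology weak_star_topology K) U" unfolding U_def
        by (rule openin_continuous_map_preimage) (auto intro: continuous_map_real_mult gc)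
      then obtain Op where Op: "openin weak_star_topology Op" "U = Op \<inter> K" unfolding openin_subtopology by blast
      have Ueq: "U = {k\<in>K. s * g k > N - ep}" unfolding U_def by auto
      have "k0 \<in> U" unfolding Ueq using k0(1) s(1) ep(1) by simp
      then have k0U: "k0 \<in> Op" using Op(2) by blast
      obtain x k where x: "x \<in> X" "norm x \<le> 1" "psi x > nphi - ep" and k: "k \<in> Op" "k \<in> K" "blinfun_apply k x > 1 - ep"
        using key_lemma[OF X D KK blpsi _ Op(1) k0U k0(1) ep(1)] npsi nphi by auto
      have sgk: "s * g k > N - ep" using Op(2) Ueq k by blast
      have "T x k = psi x * (s * g k)" unfolding psi_def using Trep[OF x(1) k(2)] s(2)
        by (metis mult.assoc mult.commute mult.left_commute mult_1)
      moreover have "psi x * (s * g k) \<ge> (nphi - ep) * (N - ep)"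
        using x(3) sgk ep by (intro mult_mono) auto
      moreover have "(nphi - ep) * (N - ep) \<ge> nphi * N - ep * (nphi + N)"
        by (simp add: algebra_simps)
      ultimately have "blinfun_apply k x + T x k > 1 - ep + nphi * N - ep * (nphi + N)" using k(3) by linarith
      moreover have "1 - ep + nphi * N - ep * (nphi + N) \<ge> Mx - e / 2"
        using ep2 unfolding Mx_def by (simp add: algebra_simps)
      ultimately have "\<bar>blinfun_apply k x + T x k\<bar> > Mx - e" using e by linarith
      moreover have xA: "x \<in> A" unfolding A_def using x by auto
      ultimately show ?thesis using inner_ge[OF xA k(2)] by (intro bexI[OF _ xA]) linarith
    qed
    have "op_norm_into_CK X K (\<lambda>x k. blinfun_apply k x + T x k) = Mx"
      unfolding op_norm_into_CK_def inner_def[symmetric] A_def[symmetric]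
    proof (rule sup_eq_approx[OF Ane])
      show "\<And>x. x \<in> A \<Longrightarrow> inner x \<le> Mx" by (rule inner_le)
      show "\<And>e. e > 0 \<Longrightarrow> \<exists>x\<in>A. inner x > Mx - e" by (rule approx)
    qed
    then show "op_norm_into_CK X K (\<lambda>x k. blinfun_apply k x + T x k) = 1 + op_norm_into_CK X K T"
      unfolding normT Mx_def .
  qed
qed

end
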